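(* Let $H_1,\dots,H_n$ be null hypotheses indexed by $\mathcal V=\{1,\dots,n\}$ with observed $p$-values $p_1,\dots,p_n$; let $\bar{\mathcal S}=\{v:H_v\text{ true}\}$ and $\mathcal S=\mathcal V\setminus\bar{\mathcal S}$. Let $\mathcal G$ be a directed acyclic graph on $\mathcal V$ such that if $H_v$ is false then $H_w$ is false for every ancestor $w$ of $v$. For each $v$ let $\mathcal C_v$ be $v$ together with all of its descendants. Assume that the null $p$-values are uniformly distributed on $[0,1]$, mutually independent, and independent of all nonnull $p$-values. For each $v$ let $G_v:\mathbb R\to\mathbb R$ be monotone increasing, let $k_v\in[1,|\mathcal C_v|]$ be an integer, and let \[f_v(p_{\mathcal C_v})=G_v\big(p_{\mathcal C_v,(k_v)}\big),\] where $p_{\mathcal C_v,(1)}\le\dots\le p_{\mathcal C_v,(|\mathcal C_v|)}$ are the order statistics of $p_{\mathcal C_v}$. Define $\tilde p_v=F_v(f_v(p_{\mathcal C_v}))$ with $F_v(t)=\Pr(f_v(u_{\mathcal C_v})\le t)$, $u_{\mathcal C_v}$ i.i.d. $\mathrm{Uniform}[0,1]$. Then $(\tilde p_v)_{v\in\mathcal V}$ satisfies PRDS on $\bar{\mathcal S}$.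
   Context: For $x,y\in\mathbb R^m$, $x\preceq y$ means $x_i\le y_i$ for all $i$. A set $D\subset\mathbb R^m$ is non-decreasing if $x\preceq y$ and $x\in D$ imply $y\in D$. A random vector $X\in\mathbb R^m$ satisfies PRDS on $T\subset\{1,\dots,m\}$ if $t\mapsto\Pr(X\in D\mid X_i=t)$ is non-decreasing for every non-decreasing set $D$ and every $i\in T$. *)

theory Defs
  imports "HOL-Probability.Probability"
begin

text \<open>Hypotheses are indexed by V = {..<n} (0-based). The DAG is an edge relation
  E on V; (v,w) in E means an edge v -> w; w is a descendant of v iff (v,w) in E^+.\<close>

definition desc_closure :: "(nat \<times> nat) set \<Rightarrow> nat \<Rightarrow> nat set" where
  "desc_closure E v = {v} \<union> {w. (v, w) \<in> E\<^sup>+}"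

text \<open>k-th order statistic (1-based) of the values of u on the finite set C.\<close>
definition kth_smallest :: "nat \<Rightarrow> nat set \<Rightarrow> (nat \<Rightarrow> real) \<Rightarrow> real" where
  "kth_smallest k C u = sort (map u (sorted_list_of_set C)) ! (k - 1)"

definition f_stat :: "(nat \<times> nat) set \<Rightarrow> (nat \<Rightarrow> real \<Rightarrow> real) \<Rightarrow> (nat \<Rightarrow> nat)
    \<Rightarrow> nat \<Rightarrow> (nat \<Rightarrow> real) \<Rightarrow> real" where
  "f_stat E G k v u = G v (kth_smallest (k v) (desc_closure E v) u)"

definition F_cdf :: "(nat \<times> nat) set \<Rightarrow> (nat \<Rightarrow> real \<Rightarrow> real) \<Rightarrow> (nat \<Rightarrow> nat)
    \<Rightarrow> nat \<Rightarrow> real \<Rightarrow> real" where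
  "F_cdf E G k v t =
     measure (PiM (desc_closure E v) (\<lambda>_. uniform_measure lborel {0..1}))
       {u \<in> space (PiM (desc_closure E v) (\<lambda>_. uniform_measure lborel {0..1})).
          f_stat E G k v u \<le> t}"

definition tilde_p :: "(nat \<times> nat) set \<Rightarrow> (nat \<Rightarrow> real \<Rightarrow> real) \<Rightarrow> (nat \<Rightarrow> nat)
    \<Rightarrow> nat \<Rightarrow> (nat \<Rightarrow> real) \<Rightarrow> real" where
  "tilde_p E G k v x = F_cdf E G k v (f_stat E G k v x)"

definition nondecreasing_set :: "nat set \<Rightarrow> (nat \<Rightarrow> real) set \<Rightarrow> bool" where
  "nondecreasing_set I D \<longleftrightarrow> D \<subseteq> (\<Pi>\<^sub>E i\<in>I. UNIV) \<and>
     (\<forall>x\<in>D. \<forall>y\<in>(\<Pi>\<^sub>E i\<in>I. UNIV). (\<forall>i\<in>I. x i \<le> y i) \<longrightarrow> y \<in> D)"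

text \<open>PRDS on T of the random vector (X i)_{i in I} under M: for every (measurable)
  non-decreasing set D and every i in T, the conditional probability
  Pr(X in D | X_i = t) admits a version g that is non-decreasing in t, i.e.
  Pr(X in D, X_i in B) = E[1_B(X_i) g(X_i)] for all Borel B.\<close>
definition PRDS :: "'a measure \<Rightarrow> nat set \<Rightarrow> (nat \<Rightarrow> 'a \<Rightarrow> real) \<Rightarrow> nat set \<Rightarrow> bool" where
  "PRDS M I X T \<longleftrightarrow>
    (\<forall>D. nondecreasing_set I D \<and> D \<in> sets (PiM I (\<lambda>_. borel)) \<longrightarrow>
      (\<forall>i\<in>T. \<exists>g :: real \<Rightarrow> real. mono g \<and> g \<in> borel_measurable borel \<and>
         (\<forall>B\<in>sets borel.
            measure M {\<omega> \<in> space M. (\<lambda>j\<in>I. X j \<omega>) \<in> D \<and> X i \<omega> \<in> B}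
              = (\<integral>\<omega>. indicator B (X i \<omega>) * g (X i \<omega>) \<partial>M))))"

end

theory Submission
  imports Defs
begin

lemma kth_le_iff:
  assumes C: "finite C" and k: "1 \<le> k" "k \<le> card C"
  shows "kth_smallest k C u \<le> t \<longleftrightarrow> k \<le> card {l\<in>C. u l \<le> t}"
proof -
  define ys where "ys = sort (map u (sorted_list_of_set C))"
  have len: "length ys = card C" unfolding ys_def using C by simp
  have srt: "sorted ys" unfolding ys_def by simp
  have cnt: "card {l\<in>C. u l \<le> t} = card {i. i < length ys \<and> ys ! i \<le> t}"
  proof -
    have "card {i. i < length ys \<and> ys ! i \<le> t} = length (filter (\<lambda>x. x \<le> t) ys)"
      by (simp add: length_filter_conv_card)
    also have "\<dots> = length (filter (\<lambda>x. x \<le> t) (map u (sorted_list_of_set C)))"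
      unfolding ys_def by (metis filter_sort length_sort)
    also have "\<dots> = card ({l. u l \<le> t} \<inter> C)"
      using C by (simp add: distinct_length_filter comp_def)
    finally show ?thesis by (simp add: Collect_conj_eq Int_commute)
  qed
  have kth: "kth_smallest k C u = ys ! (k - 1)" unfolding kth_smallest_def ys_def ..
  show ?thesis
  proof
    assume le: "kth_smallest k C u \<le> t"
    have "{..<k} \<subseteq> {i. i < length ys \<and> ys ! i \<le> t}"
    proof
      fix i assume "i \<in> {..<k}"
      then have "i \<le> k - 1" "k - 1 < length ys" using k len by auto
      then show "i \<in> {i. i < length ys \<and> ys ! i \<le> t}"
        using le kth sorted_nth_mono[OF srt] by (auto intro: order_trans)
    qed
    from card_mono[OF _ this] show "k \<le> card {l\<in>C. u l \<le> t}" using cnt by simp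
  next
    assume ge: "k \<le> card {l\<in>C. u l \<le> t}"
    show "kth_smallest k C u \<le> t"
    proof (rule ccontr)
      assume "\<not> ?thesis"
      then have gt: "t < ys ! (k - 1)" using kth by simp
      have "{i. i < length ys \<and> ys ! i \<le> t} \<subseteq> {..<k-1}"
      proof
        fix i assume i: "i \<in> {i. i < length ys \<and> ys ! i \<le> t}"
        show "i \<in> {..<k-1}"
        proof (rule ccontr)
          assume "i \<notin> {..<k-1}"
          then have "ys ! (k-1) \<le> ys ! i" using i sorted_nth_mono[OF srt] by auto
          then show False using i gt by auto
        qed
      qed
      from card_mono[OF _ this] have "card {i. i < length ys \<and> ys ! i \<le> t} \<le> k - 1" by simp
      then show False using ge cnt k by simp
    qed
  qed
qed

lemma kth_mono:
  assumes C: "finite C" and k: "1 \<le> k" "k \<le> card C" and le: "\<And>l. l \<in> C \<Longrightarrow> x l \<le> y l"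
  shows "kth_smallest k C x \<le> kth_smallest k C y"
proof -
  let ?Y = "kth_smallest k C y"
  have "k \<le> card {l\<in>C. y l \<le> ?Y}" using kth_le_iff[OF C k, of y ?Y] by simp
  also have "\<dots> \<le> card {l\<in>C. x l \<le> ?Y}"
    using C le by (intro card_mono) (auto intro: order_trans)
  finally show ?thesis using kth_le_iff[OF C k] by simp
qed

lemma kth_eqI:
  assumes C: "finite C" and k: "1 \<le> k" "k \<le> card C" and j: "j \<in> C"
    and lt: "card {l\<in>C. u l < u j} \<le> k - 1" and le: "k \<le> card {l\<in>C. u l \<le> u j}"
  shows "kth_smallest k C u = u j"
proof -
  let ?y = "kth_smallest k C u"
  have a: "?y \<le> u j" using kth_le_iff[OF C k] le by simp
  have "\<not> ?y < u j"
  proof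
    assume y: "?y < u j"
    have "k \<le> card {l\<in>C. u l \<le> ?y}" using kth_le_iff[OF C k, of u ?y] by simp
    also have "\<dots> \<le> card {l\<in>C. u l < u j}" using C y by (intro card_mono) auto
    finally show False using lt k by simp
  qed
  with a show ?thesis by simp
qed

lemma kth_exists:
  assumes C: "finite C" and k: "1 \<le> k" "k \<le> card C"
  shows "\<exists>j\<in>C. kth_smallest k C u = u j \<and> card {l\<in>C. u l < u j} \<le> k - 1"
proof -
  let ?y = "kth_smallest k C u"
  define A where "A = {l\<in>C. u l < ?y}"
  have le: "k \<le> card {l\<in>C. u l \<le> ?y}" using kth_le_iff[OF C k, of u ?y] by simp
  have cA: "card A \<le> k - 1"
  proof (rule ccontr)
    assume "\<not> ?thesis"
    then have kA: "k \<le> card A" by simp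
    then have ne: "A \<noteq> {}" using k by auto
    have fA: "finite A" using C A_def by simp
    define t where "t = Max (u ` A)"
    have tlt: "t < ?y" unfolding t_def using fA ne A_def by (subst Max_less_iff) auto
    have "A \<subseteq> {l\<in>C. u l \<le> t}" unfolding t_def using fA A_def by auto
    then have "k \<le> card {l\<in>C. u l \<le> t}" using kA card_mono[of "{l\<in>C. u l \<le> t}" A] C by simp
    then have "?y \<le> t" using kth_le_iff[OF C k] by simp
    then show False using tlt by simp
  qed
  have "\<not> {l\<in>C. u l \<le> ?y} \<subseteq> A"
  proof
    assume "{l\<in>C. u l \<le> ?y} \<subseteq> A"
    then have "card {l\<in>C. u l \<le> ?y} \<le> card A" using C A_def by (intro card_mono) auto
    then show False using le cA k by simp
  qed
  then obtain j where j: "j \<in> C" "u j = ?y" unfolding A_def by force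
  then show ?thesis using cA A_def by (intro bexI[of _ j]) (auto simp: j(2))
qed

lemma kth_measurable:
  assumes C: "finite C" and k: "1 \<le> k" "k \<le> card C"
    and X: "\<And>l. l \<in> C \<Longrightarrow> (\<lambda>w. X l w) \<in> borel_measurable M"
  shows "(\<lambda>w. kth_smallest k C (\<lambda>l. X l w)) \<in> borel_measurable M"
proof (subst borel_measurable_iff_le, intro allI)
  fix a
  have "{w \<in> space M. kth_smallest k C (\<lambda>l. X l w) \<le> a}
      = {w \<in> space M. real k \<le> (\<Sum>l\<in>C. indicator {..a} (X l w))}"
  proof -
    have "\<And>w. (\<Sum>l\<in>C. indicator {..a} (X l w) :: real) = real (card {l\<in>C. X l w \<le> a})"
      using C by (simp add: indicator_def sum.If_cases Int_def)
    then show ?thesis using kth_le_iff[OF C k] by auto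
  qed
  also have "\<dots> \<in> sets M"
    using X by measurable
  finally show "{w \<in> space M. kth_smallest k C (\<lambda>l. X l w) \<le> a} \<in> sets M" .
qed

abbreviation U01 :: "real measure" where "U01 \<equiv> uniform_measure lborel {0..1::real}"

lemma sets_U01[measurable_cong]: "sets U01 = sets borel" by simp
lemma space_U01[simp]: "space U01 = UNIV" by simp

lemma prob_U01: "prob_space U01"
  by (rule prob_space_uniform_measure) auto

interpretation UP: product_prob_space "\<lambda>_::nat. U01" UNIV
  by (simp add: product_prob_space_def product_prob_space_axioms_def prob_U01
      product_sigma_finite_def prob_space_imp_sigma_finite)

lemma U01_nn:
  assumes [measurable]: "f \<in> borel_measurable borel"
  shows "(\<integral>\<^sup>+x. f x \<partial>U01) = (\<integral>\<^sup>+x. f x * indicator {0..1} x \<partial>lborel)"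
  by (subst nn_integral_uniform_measure) (auto simp: mult.commute divide_ennreal_def)

lemma AE_U01: "AE x in U01. 0 < x \<and> x < 1"
proof -
  have "AE x in lborel. (x::real) \<noteq> 0 \<and> x \<noteq> 1"
    by (intro AE_conjI AE_lborel_singleton)
  then have "AE x in lborel. (x::real) \<in> {0..1} \<longrightarrow> 0 < x \<and> x < 1"
    by (rule eventually_mono) (auto simp: less_le)
  then show ?thesis
    by (subst AE_uniform_measure) auto
qed

lemma affine1:
  fixes a b :: real
  assumes ab: "0 \<le> a" "0 < b" "a + b \<le> 1" and f[measurable]: "f \<in> borel_measurable borel"
  shows "(\<integral>\<^sup>+x. indicator {a<..<a+b} x * f x \<partial>U01) = ennreal b * (\<integral>\<^sup>+x. f (a + b * x) \<partial>U01)"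
proof -
  have "(\<integral>\<^sup>+x. indicator {a<..<a+b} x * f x \<partial>U01) = (\<integral>\<^sup>+x. indicator {a<..<a+b} x * f x \<partial>lborel)"
    using ab by (subst U01_nn) (auto intro!: nn_integral_cong simp: indicator_def)
  also have "\<dots> = ennreal b * (\<integral>\<^sup>+x. indicator {a<..<a+b} (a + b * x) * f (a + b * x) \<partial>lborel)"
    using ab by (subst nn_integral_real_affine[where c=b and t=a]) auto
  also have "(\<integral>\<^sup>+x. indicator {a<..<a+b} (a + b * x) * f (a + b * x) \<partial>lborel)
      = (\<integral>\<^sup>+x. f (a + b * x) * indicator {0..1} x \<partial>lborel)"
  proof (rule nn_integral_cong_AE)
    show "AE x in lborel. indicator {a<..<a+b} (a + b * x) * f (a + b * x) = f (a + b * x) * indicator {0..1} x"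
      using AE_lborel_singleton[of "0::real"] AE_lborel_singleton[of "1::real"]
    proof eventually_elim
      case (elim x)
      have "(a < a + b * x \<and> a + b * x < a + b) \<longleftrightarrow> (0 < x \<and> x < 1)"
        using ab by (auto simp: mult_less_cancel_left_pos zero_less_mult_iff)
      then show ?case using elim by (auto simp: indicator_def)
    qed
  qed
  also have "\<dots> = (\<integral>\<^sup>+x. f (a + b * x) \<partial>U01)"
    by (subst U01_nn) auto
  finally show ?thesis .
qed

lemma prod_affine:
  fixes a b :: "nat \<Rightarrow> real" and f :: "(nat \<Rightarrow> real) \<Rightarrow> ennreal"
  assumes I: "finite I" and ab: "\<And>l. l \<in> I \<Longrightarrow> 0 \<le> a l \<and> 0 < b l \<and> a l + b l \<le> 1"
    and f: "f \<in> borel_measurable (PiM I (\<lambda>_. borel))"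
  shows "(\<integral>\<^sup>+x. (\<Prod>l\<in>I. indicator {a l<..<a l + b l} (x l)) * f x \<partial>PiM I (\<lambda>_. U01))
       = ennreal (\<Prod>l\<in>I. b l) * (\<integral>\<^sup>+x. f (\<lambda>l\<in>I. a l + b l * x l) \<partial>PiM I (\<lambda>_. U01))"
  using I ab f
proof (induction I arbitrary: f rule: finite_induct)
  case empty
  show ?case
    by (simp add: PiM_empty nn_integral_count_space_finite)
next
  case (insert i I)
  note fm[measurable] = insert.prems(2)
  have fm': "f \<in> borel_measurable (PiM (insert i I) (\<lambda>_. U01))"
    using fm by (simp cong: measurable_cong_sets)
  have abi: "0 \<le> a i" "0 < b i" "a i + b i \<le> 1" using insert.prems(1) by auto
  define g where "g x = (\<integral>\<^sup>+y. f (x(i := a i + b i * y)) \<partial>U01)" for x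
  have gm[measurable]: "g \<in> borel_measurable (PiM I (\<lambda>_. borel))"
    unfolding g_def by measurable
  have "(\<integral>\<^sup>+x. (\<Prod>l\<in>insert i I. indicator {a l<..<a l + b l} (x l)) * f x \<partial>PiM (insert i I) (\<lambda>_. U01))
      = (\<integral>\<^sup>+x. (\<integral>\<^sup>+y. (\<Prod>l\<in>insert i I. indicator {a l<..<a l + b l} ((x(i:=y)) l)) * f (x(i:=y)) \<partial>U01) \<partial>PiM I (\<lambda>_. U01))"
    by (rule UP.product_nn_integral_insert) (use insert in \<open>auto\<close>)
  also have "\<dots> = (\<integral>\<^sup>+x. (\<Prod>l\<in>I. indicator {a l<..<a l + b l} (x l)) * (ennreal (b i) * g x) \<partial>PiM I (\<lambda>_. U01))"
  proof (rule nn_integral_cong)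
    fix x assume x: "x \<in> space (PiM I (\<lambda>_. U01))"
    have e: "\<And>y. (\<Prod>l\<in>insert i I. indicator {a l<..<a l + b l} ((x(i:=y)) l) :: ennreal)
        = indicator {a i<..<a i + b i} y * (\<Prod>l\<in>I. indicator {a l<..<a l + b l} (x l))"
      using insert.hyps by (simp add: prod.insert) (intro arg_cong2[where f="(*)"] refl prod.cong, auto)
    have m: "(\<lambda>y. f (x(i := y))) \<in> borel_measurable borel"
      using measurable_comp[OF measurable_component_update[OF x insert.hyps(2)] fm']
      by (simp add: comp_def cong: measurable_cong_sets)
    note [measurable] = m
    have "(\<integral>\<^sup>+y. (\<Prod>l\<in>insert i I. indicator {a l<..<a l + b l} ((x(i:=y)) l)) * f (x(i:=y)) \<partial>U01)
        = (\<Prod>l\<in>I. indicator {a l<..<a l + b l} (x l)) * (\<integral>\<^sup>+y. indicator {a i<..<a i + b i} y * f (x(i:=y)) \<partial>U01)"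
      unfolding e by (subst nn_integral_cmult[symmetric]) (auto intro!: nn_integral_cong simp: mult_ac)
    also have "(\<integral>\<^sup>+y. indicator {a i<..<a i + b i} y * f (x(i:=y)) \<partial>U01) = ennreal (b i) * g x"
      unfolding g_def using affine1[OF abi m] by simp
    finally show "(\<integral>\<^sup>+y. (\<Prod>l\<in>insert i I. indicator {a l<..<a l + b l} ((x(i:=y)) l)) * f (x(i:=y)) \<partial>U01)
        = (\<Prod>l\<in>I. indicator {a l<..<a l + b l} (x l)) * (ennreal (b i) * g x)" .
  qed
  also have "\<dots> = ennreal (b i) * (\<integral>\<^sup>+x. (\<Prod>l\<in>I. indicator {a l<..<a l + b l} (x l)) * g x \<partial>PiM I (\<lambda>_. U01))"
    by (subst nn_integral_cmult[symmetric]) (auto intro!: nn_integral_cong simp: mult_ac)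
  also have "\<dots> = ennreal (b i) * (ennreal (\<Prod>l\<in>I. b l) * (\<integral>\<^sup>+x. g (\<lambda>l\<in>I. a l + b l * x l) \<partial>PiM I (\<lambda>_. U01)))"
    by (subst insert.IH[OF _ gm]) (use insert.prems(1) in auto)
  also have "(\<integral>\<^sup>+x. g (\<lambda>l\<in>I. a l + b l * x l) \<partial>PiM I (\<lambda>_. U01))
      = (\<integral>\<^sup>+x. (\<integral>\<^sup>+y. f (\<lambda>l\<in>insert i I. a l + b l * (x(i:=y)) l) \<partial>U01) \<partial>PiM I (\<lambda>_. U01))"
  proof (rule nn_integral_cong)
    fix x
    have "\<And>y. (\<lambda>l\<in>I. a l + b l * x l)(i := a i + b i * y) = (\<lambda>l\<in>insert i I. a l + b l * (x(i:=y)) l)"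
      using insert.hyps by (auto simp: fun_eq_iff)
    then show "g (\<lambda>l\<in>I. a l + b l * x l) = (\<integral>\<^sup>+y. f (\<lambda>l\<in>insert i I. a l + b l * (x(i:=y)) l) \<partial>U01)"
      unfolding g_def by simp
  qed
  also have "\<dots> = (\<integral>\<^sup>+x. f (\<lambda>l\<in>insert i I. a l + b l * x l) \<partial>PiM (insert i I) (\<lambda>_. U01))"
    by (rule UP.product_nn_integral_insert[symmetric]) (use insert in \<open>auto\<close>)
  finally have X: "(\<integral>\<^sup>+x. (\<Prod>l\<in>insert i I. indicator {a l<..<a l + b l} (x l)) * f x \<partial>PiM (insert i I) (\<lambda>_. U01))
     = ennreal (b i) * (ennreal (\<Prod>l\<in>I. b l) * (\<integral>\<^sup>+x. f (\<lambda>l\<in>insert i I. a l + b l * x l) \<partial>PiM (insert i I) (\<lambda>_. U01)))" .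
  have bnn: "0 \<le> b i" "0 \<le> prod b I" using insert.prems(1) by (auto intro!: prod_nonneg simp: less_imp_le)
  show ?case
    using X by (simp only: prod.insert[OF insert.hyps] ennreal_mult[OF bnn] mult.assoc)
qed

abbreviation Q :: "nat set \<Rightarrow> (nat \<Rightarrow> real) measure" where "Q C \<equiv> PiM C (\<lambda>_. U01)"

definition Tmap :: "nat set \<Rightarrow> nat \<Rightarrow> nat set \<Rightarrow> real \<Rightarrow> (nat \<Rightarrow> real) \<Rightarrow> nat \<Rightarrow> real" where
  "Tmap C j S z s = (\<lambda>l\<in>C. if l = j then z else if l \<in> S then z * s l else z + (1 - z) * s l)"

definition Ev :: "nat set \<Rightarrow> nat \<Rightarrow> nat set \<Rightarrow> (nat \<Rightarrow> real) \<Rightarrow> bool" where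
  "Ev C j S u \<longleftrightarrow> (\<forall>l\<in>S. 0 < u l \<and> u l < u j) \<and> (\<forall>l\<in>C - {j} - S. u j < u l \<and> u l < 1)"

lemma Tmap_measurable:
  "(\<lambda>x. Tmap C j S (fst x) (snd x)) \<in> measurable (borel \<Otimes>\<^sub>M PiM (C - {j}) (\<lambda>_. U01)) (PiM C (\<lambda>_. borel))"
  unfolding Tmap_def
proof (rule measurable_restrict)
  fix l assume l: "l \<in> C"
  show "(\<lambda>x. if l = j then fst x else if l \<in> S then fst x * snd x l else fst x + (1 - fst x) * snd x l)
      \<in> borel_measurable (borel \<Otimes>\<^sub>M PiM (C - {j}) (\<lambda>_. U01))"
  proof (cases "l = j")
    case True
    then show ?thesis by simp
  next
    case False
    then have l': "l \<in> C - {j}" using l by auto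
    have [measurable]: "(\<lambda>x. snd x l) \<in> borel_measurable (borel \<Otimes>\<^sub>M PiM (C - {j}) (\<lambda>_. U01))"
      using measurable_comp[OF measurable_snd measurable_component_singleton[OF l', of "\<lambda>_. U01"]]
      by (simp add: comp_def cong: measurable_cong_sets)
    show ?thesis using l False by (cases "l \<in> S") simp_all
  qed
qed

lemma Ev_alt: "j \<in> C \<Longrightarrow> S \<subseteq> C - {j} \<Longrightarrow> Ev C j S u \<longleftrightarrow>
   (\<forall>l\<in>C. (l \<in> S \<longrightarrow> 0 < u l \<and> u l < u j) \<and> (l \<notin> S \<and> l \<noteq> j \<longrightarrow> u j < u l \<and> u l < 1))"
  unfolding Ev_def by auto

lemma Ev_measurable[measurable]:
  assumes "finite C" "j \<in> C" "S \<subseteq> C - {j}"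
  shows "Measurable.pred (PiM C (\<lambda>_. borel)) (Ev C j S)"
proof -
  have "Measurable.pred (PiM C (\<lambda>_. borel)) (\<lambda>u::nat\<Rightarrow>real. \<forall>l\<in>C. (l \<in> S \<longrightarrow> 0 < u l \<and> u l < u j) \<and> (l \<notin> S \<and> l \<noteq> j \<longrightarrow> u j < u l \<and> u l < 1))"
    using assms(1,2) by measurable
  moreover have "Ev C j S = (\<lambda>u::nat\<Rightarrow>real. \<forall>l\<in>C. (l \<in> S \<longrightarrow> 0 < u l \<and> u l < u j) \<and> (l \<notin> S \<and> l \<noteq> j \<longrightarrow> u j < u l \<and> u l < 1))"
    using Ev_alt[OF assms(2,3)] by (intro ext) 
  ultimately show ?thesis by simp
qed

lemma term_formula:
  fixes \<psi> :: "(nat \<Rightarrow> real) \<Rightarrow> ennreal"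
  assumes C: "finite C" and j: "j \<in> C" and S: "S \<subseteq> C - {j}"
    and \<psi>[measurable]: "\<psi> \<in> borel_measurable (PiM C (\<lambda>_. borel))" and A[measurable]: "A \<in> sets borel"
  shows "(\<integral>\<^sup>+u. indicator {u. Ev C j S u} u * indicator A (u j) * \<psi> u \<partial>Q C)
    = (\<integral>\<^sup>+z. indicator A z * ennreal (z ^ card S * (1 - z) ^ card (C - {j} - S))
          * (\<integral>\<^sup>+s. \<psi> (Tmap C j S z s) \<partial>Q (C - {j})) \<partial>U01)"
proof -
  define C' where "C' = C - {j}"
  have CC: "C = insert j C'" "j \<notin> C'" "finite C'" using j C unfolding C'_def by auto
  have evm: "Measurable.pred (PiM C (\<lambda>_. borel)) (Ev C j S)" using C j S by (rule Ev_measurable)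
  have mF: "(\<lambda>u. indicator {u. Ev C j S u} u * indicator A (u j) * \<psi> u) \<in> borel_measurable (PiM (insert j C') (\<lambda>_. U01))"
    using evm j unfolding CC(1)[symmetric] by (simp cong: measurable_cong_sets) measurable
  have "(\<integral>\<^sup>+u. indicator {u. Ev C j S u} u * indicator A (u j) * \<psi> u \<partial>Q C)
    = (\<integral>\<^sup>+z. (\<integral>\<^sup>+x. indicator {u. Ev C j S u} (x(j:=z)) * indicator A ((x(j:=z)) j) * \<psi> (x(j:=z)) \<partial>Q C') \<partial>U01)"
    using UP.product_nn_integral_insert_rev[OF CC(3,2) mF] unfolding CC(1)[symmetric] by simp
  also have "\<dots> = (\<integral>\<^sup>+z. indicator A z * ennreal (z ^ card S * (1 - z) ^ card (C' - S))
          * (\<integral>\<^sup>+s. \<psi> (Tmap C j S z s) \<partial>Q C') \<partial>U01)"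
  proof (rule nn_integral_cong_AE)
    show "AE z in U01. (\<integral>\<^sup>+x. indicator {u. Ev C j S u} (x(j:=z)) * indicator A ((x(j:=z)) j) * \<psi> (x(j:=z)) \<partial>Q C')
       = indicator A z * ennreal (z ^ card S * (1 - z) ^ card (C' - S)) * (\<integral>\<^sup>+s. \<psi> (Tmap C j S z s) \<partial>Q C')"
      using AE_U01
    proof eventually_elim
      case (elim z)
      define a where "a l = (if l \<in> S then 0 else z)" for l
      define b where "b l = (if l \<in> S then z else 1 - z)" for l
      have ab: "\<And>l. l \<in> C' \<Longrightarrow> 0 \<le> a l \<and> 0 < b l \<and> a l + b l \<le> 1"
        using elim unfolding a_def b_def by auto
      define f where "f x = indicator A z * \<psi> (x(j:=z))" for x
      have fm: "f \<in> borel_measurable (PiM C' (\<lambda>_. borel))"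
      proof -
        have "(\<lambda>x. x(j:=z)) \<in> measurable (PiM C' (\<lambda>_. borel)) (PiM C (\<lambda>_. borel))"
          unfolding CC(1) by (rule measurable_PiM_single') (auto simp: space_PiM PiE_iff extensional_def)
        then show ?thesis unfolding f_def by measurable
      qed
      have ind: "\<And>x. indicator {u. Ev C j S u} (x(j:=z)) = (\<Prod>l\<in>C'. indicator {a l<..<a l + b l} (x l) :: ennreal)"
      proof -
        fix x
        have "Ev C j S (x(j:=z)) \<longleftrightarrow> (\<forall>l\<in>C'. x l \<in> {a l<..<a l + b l})"
          unfolding Ev_def a_def b_def C'_def using S by auto
        then show "indicator {u. Ev C j S u} (x(j:=z)) = (\<Prod>l\<in>C'. indicator {a l<..<a l + b l} (x l) :: ennreal)"
        proof (cases "\<forall>l\<in>C'. x l \<in> {a l<..<a l + b l}")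
          case True
          then have "(\<Prod>l\<in>C'. indicator {a l<..<a l + b l} (x l) :: ennreal) = (\<Prod>l\<in>C'. 1)"
            by (intro prod.cong) auto
          then show ?thesis using True \<open>Ev C j S (x(j:=z)) \<longleftrightarrow> _\<close> by (simp add: indicator_def)
        next
          case False
          then obtain l where "l \<in> C'" "x l \<notin> {a l<..<a l + b l}" by blast
          then have "(\<Prod>l\<in>C'. indicator {a l<..<a l + b l} (x l) :: ennreal) = 0"
            using CC(3) by (intro prod_zero bexI[of _ l]) auto
          then show ?thesis using False \<open>Ev C j S (x(j:=z)) \<longleftrightarrow> _\<close> by (simp add: indicator_def)
        qed
      qed
      have "(\<integral>\<^sup>+x. indicator {u. Ev C j S u} (x(j:=z)) * indicator A ((x(j:=z)) j) * \<psi> (x(j:=z)) \<partial>Q C')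
          = (\<integral>\<^sup>+x. (\<Prod>l\<in>C'. indicator {a l<..<a l + b l} (x l)) * f x \<partial>Q C')"
        by (simp add: ind f_def mult.assoc)
      also have "\<dots> = ennreal (\<Prod>l\<in>C'. b l) * (\<integral>\<^sup>+x. f (\<lambda>l\<in>C'. a l + b l * x l) \<partial>Q C')"
        by (rule prod_affine[OF CC(3) ab fm])
      also have "(\<Prod>l\<in>C'. b l) = z ^ card S * (1 - z) ^ card (C' - S)"
      proof -
        have "(\<Prod>l\<in>C'. b l) = (\<Prod>l\<in>C' \<inter> S. z) * (\<Prod>l\<in>C' - S. 1 - z)"
          unfolding b_def using CC(3) by (simp add: prod.If_cases Diff_eq)
        also have "C' \<inter> S = S" using S C'_def by auto
        finally show ?thesis by simp
      qed
      also have "(\<integral>\<^sup>+x. f (\<lambda>l\<in>C'. a l + b l * x l) \<partial>Q C') = indicator A z * (\<integral>\<^sup>+s. \<psi> (Tmap C j S z s) \<partial>Q C')"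
      proof -
        have "\<And>x. (\<lambda>l\<in>C'. a l + b l * x l)(j := z) = Tmap C j S z x"
          unfolding Tmap_def a_def b_def using CC by (auto simp: fun_eq_iff)
        then show ?thesis unfolding f_def by (cases "z \<in> A") simp_all
      qed
      finally show ?case by (simp only: mult.assoc mult.commute mult.left_commute)
    qed
  qed
  finally show ?thesis unfolding C'_def .
qed

lemma AE_U01_ne: "AE y in U01. y \<noteq> c"
proof -
  have "AE y in lborel. (y::real) \<in> {0..1} \<longrightarrow> y \<noteq> c"
    using AE_lborel_singleton[of c] by (rule eventually_mono) auto
  then show ?thesis by (subst AE_uniform_measure) auto
qed

lemma AE_Q_distinct:
  assumes C: "finite C" and l: "l \<in> C" "l' \<in> C" "l \<noteq> l'"
  shows "AE u in Q C. u l \<noteq> u l'"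
proof -
  have cl: "C = insert l (C - {l})" using l by auto
  have [measurable]: "(\<lambda>u. u l) \<in> borel_measurable (PiM C (\<lambda>_. borel))" "(\<lambda>u. u l') \<in> borel_measurable (PiM C (\<lambda>_. borel))"
    using l by simp_all
  have "(\<integral>\<^sup>+u. indicator {u. \<not> u l \<noteq> u l'} u \<partial>Q C) = 0"
  proof -
    have mf: "(\<lambda>u. indicator {u. u l = u l'} u :: ennreal) \<in> borel_measurable (Q (insert l (C - {l})))"
    proof -
      have "(\<lambda>u. u l) \<in> borel_measurable (Q C)" "(\<lambda>u. u l') \<in> borel_measurable (Q C)"
        using l by (simp_all cong: measurable_cong_sets)
      from borel_measurable_eq[OF this] have "{u \<in> space (Q C). u l = u l'} \<in> sets (Q C)" .
      then have "{u. u l = u l'} \<inter> space (Q C) \<in> sets (Q C)" by (simp add: Int_commute Collect_conj_eq)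
      then show ?thesis unfolding cl[symmetric] by (simp add: borel_measurable_indicator_iff)
    qed
    have "(\<integral>\<^sup>+u. indicator {u. u l = u l'} u \<partial>Q C)
      = (\<integral>\<^sup>+x. (\<integral>\<^sup>+y. indicator {u. u l = u l'} (x(l:=y)) \<partial>U01) \<partial>Q (C - {l}))"
      using UP.product_nn_integral_insert[of "C - {l}" l, OF _ _ mf] C cl by simp
    also have "\<dots> = (\<integral>\<^sup>+x. 0 \<partial>Q (C - {l}))"
    proof (rule nn_integral_cong)
      fix x
      have "(\<integral>\<^sup>+y. indicator {u. u l = u l'} (x(l:=y)) \<partial>U01) = (\<integral>\<^sup>+y. indicator {x l'} y \<partial>U01)"
        using l by (intro nn_integral_cong) (auto simp: indicator_def)
      also have "\<dots> = 0"
        using AE_U01_ne[of "x l'"] by (subst nn_integral_0_iff_AE) (auto simp: indicator_def cong: measurable_cong_sets)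
      finally show "(\<integral>\<^sup>+y. indicator {u. u l = u l'} (x(l:=y)) \<partial>U01) = 0" .
    qed
    finally show ?thesis by simp
  qed
  moreover have "(\<lambda>u. u l) \<in> borel_measurable (Q C)" "(\<lambda>u. u l') \<in> borel_measurable (Q C)"
    using l by (simp_all cong: measurable_cong_sets)
  from borel_measurable_eq[OF this] have "{u \<in> space (Q C). u l = u l'} \<in> sets (Q C)" .
  then have "{u \<in> space (Q C). u l \<noteq> u l'} \<in> sets (Q C)"
    using sets.compl_sets[OF \<open>{u \<in> space (Q C). u l = u l'} \<in> sets (Q C)\<close>]
    by (simp add: set_diff_eq) (metis (mono_tags, lifting) Collect_cong)
  ultimately show ?thesis
    by (subst AE_iff_nn_integral) auto
qed

lemma AE_Q_good:
  assumes C: "finite C"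
  shows "AE u in Q C. (\<forall>l\<in>C. 0 < u l \<and> u l < 1) \<and> (\<forall>l\<in>C. \<forall>l'\<in>C. l \<noteq> l' \<longrightarrow> u l \<noteq> u l')"
proof -
  have 1: "AE u in Q C. (\<forall>l\<in>C. 0 < u l \<and> u l < 1)"
  proof (rule AE_finite_allI[OF C])
    fix l assume l: "l \<in> C"
    show "AE u in Q C. 0 < u l \<and> u l < 1"
      by (rule AE_PiM_component[OF _ l AE_U01]) (simp add: prob_U01)
  qed
  have 2: "AE u in Q C. (\<forall>l\<in>C. \<forall>l'\<in>C. l \<noteq> l' \<longrightarrow> u l \<noteq> u l')"
  proof (rule AE_finite_allI[OF C])
    fix l assume l: "l \<in> C"
    show "AE u in Q C. \<forall>l'\<in>C. l \<noteq> l' \<longrightarrow> u l \<noteq> u l'"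
    proof (rule AE_finite_allI[OF C])
      fix l' assume "l' \<in> C"
      then show "AE u in Q C. l \<noteq> l' \<longrightarrow> u l \<noteq> u l'"
        using AE_Q_distinct[OF C l] by (cases "l = l'") auto
    qed
  qed
  from 1 2 show ?thesis by (rule AE_conjI)
qed

definition Idx :: "nat set \<Rightarrow> nat \<Rightarrow> (nat \<times> nat set) set" where
  "Idx C k = {(j, S). j \<in> C \<and> S \<subseteq> C - {j} \<and> card S = k - 1}"

definition Psi :: "nat set \<Rightarrow> nat \<Rightarrow> ((nat \<Rightarrow> real) \<Rightarrow> ennreal) \<Rightarrow> real \<Rightarrow> ennreal" where
  "Psi C k \<psi> z = (\<Sum>(j, S)\<in>Idx C k. \<integral>\<^sup>+s. \<psi> (Tmap C j S z s) \<partial>Q (C - {j}))"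

lemma finite_Idx: "finite C \<Longrightarrow> finite (Idx C k)"
  by (rule finite_subset[of _ "C \<times> Pow C"]) (auto simp: Idx_def)

lemma prob_Q: "prob_space (Q C)"
  by (rule prob_space_PiM) (simp add: prob_U01)

lemma Phi_measurable:
  assumes [measurable]: "\<psi> \<in> borel_measurable (PiM C (\<lambda>_. borel))"
  shows "(\<lambda>z. \<integral>\<^sup>+s. \<psi> (Tmap C j S z s) \<partial>Q (C - {j})) \<in> borel_measurable borel"
proof -
  interpret sf: sigma_finite_measure "Q (C - {j})"
    using prob_Q by (simp add: prob_space_imp_sigma_finite)
  have "(\<lambda>x. \<psi> (Tmap C j S (fst x) (snd x))) \<in> borel_measurable (borel \<Otimes>\<^sub>M Q (C - {j}))"
    using measurable_comp[OF Tmap_measurable assms] by (simp add: comp_def)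
  then have "case_prod (\<lambda>z s. \<psi> (Tmap C j S z s)) \<in> borel_measurable (borel \<Otimes>\<^sub>M Q (C - {j}))"
    by (simp add: case_prod_beta')
  then show ?thesis by (rule sf.borel_measurable_nn_integral)
qed

lemma Psi_measurable:
  assumes [measurable]: "\<psi> \<in> borel_measurable (PiM C (\<lambda>_. borel))"
  shows "Psi C k \<psi> \<in> borel_measurable borel"
  unfolding Psi_def
  by (intro borel_measurable_sum) (auto simp: case_prod_beta intro: Phi_measurable[OF assms])

lemma sum_indicator_Ev:
  assumes C: "finite C" and k: "1 \<le> k" "k \<le> card C"
    and pos: "\<forall>l\<in>C. 0 < u l \<and> u l < 1" and dist: "\<forall>l\<in>C. \<forall>l'\<in>C. l \<noteq> l' \<longrightarrow> u l \<noteq> u l'"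
  shows "(\<Sum>(j, S)\<in>Idx C k. indicator {u. Ev C j S u} u * indicator A (u j) :: ennreal)
       = indicator A (kth_smallest k C u)"
proof -
  obtain j0 where j0: "j0 \<in> C" "kth_smallest k C u = u j0" "card {l\<in>C. u l < u j0} \<le> k - 1"
    using kth_exists[OF C k] by blast
  define S0 where "S0 = {l\<in>C. u l < u j0}"
  have le_eq: "{l\<in>C. u l \<le> u j0} = insert j0 S0"
    using j0 dist unfolding S0_def by (auto simp: less_le)
  have "k \<le> card {l\<in>C. u l \<le> u j0}"
    using kth_le_iff[OF C k, of u "u j0"] j0 by simp
  also have "\<dots> = Suc (card S0)"
    unfolding le_eq using C S0_def by (subst card_insert_disjoint) auto
  finally have cS0: "card S0 = k - 1" using j0(3) S0_def by simp
  have in_idx: "(j0, S0) \<in> Idx C k" using j0 cS0 unfolding Idx_def S0_def by auto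
  have ev0: "Ev C j0 S0 u"
    unfolding Ev_def S0_def using pos dist j0(1) by (auto simp: not_less less_le)
  have uniq: "(j, S) = (j0, S0)" if js: "(j, S) \<in> Idx C k" and ev: "Ev C j S u" for j S
  proof -
    from js have j: "j \<in> C" "S \<subseteq> C - {j}" "card S = k - 1" unfolding Idx_def by auto
    have lt: "{l\<in>C. u l < u j} = S"
    proof
      show "S \<subseteq> {l\<in>C. u l < u j}" using ev j unfolding Ev_def by auto
      show "{l\<in>C. u l < u j} \<subseteq> S"
      proof
        fix l assume l: "l \<in> {l\<in>C. u l < u j}"
        show "l \<in> S"
        proof (rule ccontr)
          assume "l \<notin> S"
          then have "l \<in> C - {j} - S" using l by auto
          then have "u j < u l" using ev unfolding Ev_def by blast
          then show False using l by simp
        qed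
      qed
    qed
    have le: "{l\<in>C. u l \<le> u j} = insert j S"
      using lt j dist by (auto simp: less_le)
    have "card {l\<in>C. u l \<le> u j} = Suc (card S)"
      unfolding le using C j finite_subset by (subst card_insert_disjoint) auto
    then have "kth_smallest k C u = u j"
      using kth_eqI[OF C k j(1)] lt j(3) k by simp
    then have "u j = u j0" using j0 by simp
    then have "j = j0" using dist j(1) j0(1) by blast
    then show ?thesis using lt S0_def by simp
  qed
  have "(\<Sum>(j, S)\<in>Idx C k. indicator {u. Ev C j S u} u * indicator A (u j) :: ennreal)
      = (case (j0, S0) of (j, S) \<Rightarrow> indicator {u. Ev C j S u} u * indicator A (u j))"
  proof -
    have "(\<Sum>x\<in>Idx C k - {(j0, S0)}. (case x of (j, S) \<Rightarrow> (indicator {u. Ev C j S u} u * indicator A (u j) :: ennreal))) = 0"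
    proof (rule sum.neutral, intro ballI)
      fix x assume x: "x \<in> Idx C k - {(j0, S0)}"
      obtain j S where xe: "x = (j, S)" by (cases x)
      then have "\<not> Ev C j S u" using uniq x by blast
      then show "(case x of (j, S) \<Rightarrow> (indicator {u. Ev C j S u} u * indicator A (u j) :: ennreal)) = 0"
        using xe by simp
    qed
    then show ?thesis
      using sum.remove[OF finite_Idx[OF C] in_idx, of "\<lambda>x. case x of (j, S) \<Rightarrow> (indicator {u. Ev C j S u} u * indicator A (u j) :: ennreal)"]
      by simp
  qed
  also have "\<dots> = indicator A (kth_smallest k C u)"
    using ev0 j0 by simp
  finally show ?thesis .
qed

lemma stepA:
  fixes \<psi> :: "(nat \<Rightarrow> real) \<Rightarrow> ennreal"
  assumes C: "finite C" and k: "1 \<le> k" "k \<le> card C"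
    and \<psi>[measurable]: "\<psi> \<in> borel_measurable (PiM C (\<lambda>_. borel))" and A[measurable]: "A \<in> sets borel"
  shows "(\<integral>\<^sup>+u. indicator A (kth_smallest k C u) * \<psi> u \<partial>Q C)
    = (\<integral>\<^sup>+z. indicator A z * ennreal (z ^ (k - 1) * (1 - z) ^ (card C - k)) * Psi C k \<psi> z \<partial>U01)"
proof -
  have evm: "\<And>j S. (j, S) \<in> Idx C k \<Longrightarrow> (\<lambda>u. indicator {u. Ev C j S u} u * indicator A (u j) * \<psi> u :: ennreal) \<in> borel_measurable (Q C)"
  proof -
    fix j S assume "(j, S) \<in> Idx C k"
    then have js: "j \<in> C" "S \<subseteq> C - {j}" unfolding Idx_def by auto
    note [measurable] = Ev_measurable[OF C js]
    have [measurable]: "(\<lambda>u. u j) \<in> borel_measurable (PiM C (\<lambda>_. borel))" using js by simp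
    show "(\<lambda>u. indicator {u. Ev C j S u} u * indicator A (u j) * \<psi> u :: ennreal) \<in> borel_measurable (Q C)"
      by (simp cong: measurable_cong_sets) measurable
  qed
  have "(\<integral>\<^sup>+u. indicator A (kth_smallest k C u) * \<psi> u \<partial>Q C)
      = (\<integral>\<^sup>+u. (\<Sum>x\<in>Idx C k. case x of (j, S) \<Rightarrow> indicator {u. Ev C j S u} u * indicator A (u j) * \<psi> u) \<partial>Q C)"
  proof (rule nn_integral_cong_AE)
    show "AE u in Q C. indicator A (kth_smallest k C u) * \<psi> u
        = (\<Sum>x\<in>Idx C k. case x of (j, S) \<Rightarrow> indicator {u. Ev C j S u} u * indicator A (u j) * \<psi> u)"
      using AE_Q_good[OF C]
    proof eventually_elim
      case (elim u)
      then have "indicator A (kth_smallest k C u) = (\<Sum>(j, S)\<in>Idx C k. indicator {u. Ev C j S u} u * indicator A (u j) :: ennreal)"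
        using sum_indicator_Ev[OF C k] by auto
      then show ?case by (simp add: sum_distrib_right case_prod_beta)
    qed
  qed
  also have "\<dots> = (\<Sum>x\<in>Idx C k. \<integral>\<^sup>+u. (case x of (j, S) \<Rightarrow> indicator {u. Ev C j S u} u * indicator A (u j) * \<psi> u) \<partial>Q C)"
    by (rule nn_integral_sum) (auto split: prod.splits intro: evm)
  also have "\<dots> = (\<Sum>x\<in>Idx C k. \<integral>\<^sup>+z. (case x of (j, S) \<Rightarrow> indicator A z * ennreal (z ^ (k - 1) * (1 - z) ^ (card C - k))
          * (\<integral>\<^sup>+s. \<psi> (Tmap C j S z s) \<partial>Q (C - {j}))) \<partial>U01)"
  proof (rule sum.cong[OF refl])
    fix x assume x: "x \<in> Idx C k"
    obtain j S where xe: "x = (j, S)" by (cases x)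
    with x have js: "j \<in> C" "S \<subseteq> C - {j}" "card S = k - 1" unfolding Idx_def by auto
    have "card (C - {j} - S) = card C - k"
      using js C k by (simp add: card_Diff_subset finite_subset)
    then show "(\<integral>\<^sup>+u. (case x of (j, S) \<Rightarrow> indicator {u. Ev C j S u} u * indicator A (u j) * \<psi> u) \<partial>Q C)
      = (\<integral>\<^sup>+z. (case x of (j, S) \<Rightarrow> indicator A z * ennreal (z ^ (k - 1) * (1 - z) ^ (card C - k))
          * (\<integral>\<^sup>+s. \<psi> (Tmap C j S z s) \<partial>Q (C - {j}))) \<partial>U01)"
      using term_formula[OF C js(1,2) \<psi> A] xe js(3) by simp
  qed
  also have "\<dots> = (\<integral>\<^sup>+z. (\<Sum>x\<in>Idx C k. case x of (j, S) \<Rightarrow> indicator A z * ennreal (z ^ (k - 1) * (1 - z) ^ (card C - k))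
          * (\<integral>\<^sup>+s. \<psi> (Tmap C j S z s) \<partial>Q (C - {j}))) \<partial>U01)"
  proof (rule nn_integral_sum[symmetric])
    fix x assume "x \<in> Idx C k"
    obtain j S where xe: "x = (j, S)" by (cases x)
    have [measurable]: "(\<lambda>z. \<integral>\<^sup>+s. \<psi> (Tmap C j S z s) \<partial>Q (C - {j})) \<in> borel_measurable borel"
      by (rule Phi_measurable[OF \<psi>])
    have "(\<lambda>z. indicator A z * ennreal (z ^ (k - 1) * (1 - z) ^ (card C - k))
          * (\<integral>\<^sup>+s. \<psi> (Tmap C j S z s) \<partial>Q (C - {j}))) \<in> borel_measurable borel"
      by measurable
    then show "(\<lambda>z. case x of (j, S) \<Rightarrow> indicator A z * ennreal (z ^ (k - 1) * (1 - z) ^ (card C - k))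
          * (\<integral>\<^sup>+s. \<psi> (Tmap C j S z s) \<partial>Q (C - {j}))) \<in> borel_measurable U01"
      unfolding xe by (simp cong: measurable_cong_sets)
  qed
  also have "\<dots> = (\<integral>\<^sup>+z. indicator A z * ennreal (z ^ (k - 1) * (1 - z) ^ (card C - k)) * Psi C k \<psi> z \<partial>U01)"
    unfolding Psi_def by (simp add: sum_distrib_left case_prod_beta)
  finally show ?thesis .
qed

lemma stepB:
  fixes \<nu> :: "real measure" and \<psi>r H :: "real \<Rightarrow> real"
  assumes prob: "prob_space \<nu>" and sets_nu: "sets \<nu> = sets borel"
    and AE01: "AE z in \<nu>. 0 < z \<and> z < 1"
    and pos: "\<And>a b. 0 < a \<Longrightarrow> a < b \<Longrightarrow> b \<le> 1 \<Longrightarrow> emeasure \<nu> {a..b} \<noteq> 0"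
    and \<psi>mono: "mono \<psi>r" and \<psi>b: "\<And>z. 0 \<le> \<psi>r z \<and> \<psi>r z \<le> 1"
    and Hmono: "mono H"
  shows "\<exists>g. mono g \<and> (\<forall>t. 0 \<le> g t \<and> g t \<le> 1) \<and>
    (\<forall>B\<in>sets borel. (\<integral>\<^sup>+z. indicator B (H z) * ennreal (\<psi>r z) \<partial>\<nu>) = (\<integral>\<^sup>+z. indicator B (H z) * ennreal (g (H z)) \<partial>\<nu>))"
proof -
  interpret prob_space \<nu> by (rule prob)
  have space_nu[simp]: "space \<nu> = UNIV" using sets_eq_imp_space_eq[OF sets_nu] by simp
  have Hm[measurable]: "H \<in> borel_measurable borel" using Hmono by (rule borel_measurable_mono)
  have \<psi>m[measurable]: "\<psi>r \<in> borel_measurable borel" using \<psi>mono by (rule borel_measurable_mono)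
  have Hm'[measurable]: "H \<in> borel_measurable \<nu>" using Hm by (simp cong: measurable_cong_sets add: sets_nu)
  have \<psi>m'[measurable]: "\<psi>r \<in> borel_measurable \<nu>" using \<psi>m by (simp cong: measurable_cong_sets add: sets_nu)
  define L where "L t = H -` {t}" for t
  have Ls[measurable]: "L t \<in> sets \<nu>" for t
    unfolding L_def using measurable_sets[OF Hm', of "{t}"] by simp
  define mu where "mu t = measure \<nu> (L t)" for t
  have emu: "emeasure \<nu> (L t) = ennreal (mu t)" for t unfolding mu_def by (rule emeasure_eq_measure)
  have mu_nn: "0 \<le> mu t" for t unfolding mu_def by simp
  define T where "T = {t. mu t \<noteq> 0}"
  have cT: "countable T"
  proof -
    interpret D: finite_measure "distr \<nu> borel H" by (rule finite_measure_distr) (simp_all add: finite_measure_axioms)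
    have "\<And>t. measure (distr \<nu> borel H) {t} = mu t"
      unfolding mu_def L_def by (subst measure_distr) (auto simp: vimage_def)
    then show ?thesis using D.countable_support unfolding T_def by simp
  qed
  define zs where "zs t = Sup ({z\<in>{0..1}. H z \<le> t} \<union> {0})" for t
  have bdd: "bdd_above ({z\<in>{0..1}. H z \<le> t} \<union> {0::real})" for t
    by (rule bdd_aboveI[of _ 1]) auto
  have F1: "y \<le> zs t" if "y \<in> {0..1}" "H y \<le> t" for y t
    unfolding zs_def by (rule cSup_upper) (use that bdd in auto)
  have F2: "zs t \<le> y" if y: "y \<in> {0..1}" "t < H y" for y t
    unfolding zs_def
  proof (rule cSup_least)
    fix x assume "x \<in> {z\<in>{0..1}. H z \<le> t} \<union> {0}"
    then show "x \<le> y"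
    proof
      assume x: "x \<in> {z\<in>{0..1}. H z \<le> t}"
      show "x \<le> y"
      proof (rule ccontr)
        assume "\<not> x \<le> y"
        then have "H y \<le> H x" using Hmono by (auto simp: mono_def)
        then show False using x y by auto
      qed
    qed (use y in auto)
  qed simp
  have F3: "zs t \<le> zs t'" if "t \<le> t'" for t t'
    unfolding zs_def by (rule cSup_subset_mono) (use that bdd in auto)
  have zs01: "zs t \<in> {0..1}" for t
  proof -
    have "0 \<le> zs t" unfolding zs_def by (rule cSup_upper) (use bdd in auto)
    moreover have "zs t \<le> 1" unfolding zs_def by (rule cSup_least) auto
    ultimately show ?thesis by simp
  qed
  have F4: "zs (H z) = z" if z: "0 < z" "z < 1" "mu (H z) = 0" for z
  proof (rule antisym)
    show "z \<le> zs (H z)" using F1[of z "H z"] z by simp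
    show "zs (H z) \<le> z"
      unfolding zs_def
    proof (rule cSup_least)
      fix x assume "x \<in> {z'\<in>{0..1}. H z' \<le> H z} \<union> {0}"
      then show "x \<le> z"
      proof
        assume x: "x \<in> {z'\<in>{0..1}. H z' \<le> H z}"
        show "x \<le> z"
        proof (rule ccontr)
          assume xz: "\<not> x \<le> z"
          have "{z..x} \<subseteq> L (H z)"
          proof
            fix y assume y: "y \<in> {z..x}"
            then have "H z \<le> H y" "H y \<le> H x" using Hmono by (auto simp: mono_def)
            then show "y \<in> L (H z)" using x unfolding L_def by auto
          qed
          then have "emeasure \<nu> {z..x} \<le> emeasure \<nu> (L (H z))"
            by (intro emeasure_mono) (simp_all add: Ls)
          also have "\<dots> = 0" using emu z(3) by simp
          finally show False using pos[of z x] z xz x by auto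
        qed
      qed (use z in auto)
    qed simp
  qed
  define avgE where "avgE t = (\<integral>\<^sup>+z. indicator (L t) z * ennreal (\<psi>r z) \<partial>\<nu>)" for t
  have avgE_le: "avgE t \<le> ennreal (c * mu t)" if "AE z in \<nu>. z \<in> L t \<longrightarrow> \<psi>r z \<le> c" "0 \<le> c" for t c
  proof -
    have "avgE t \<le> (\<integral>\<^sup>+z. indicator (L t) z * ennreal c \<partial>\<nu>)"
      unfolding avgE_def using that(1)
      by (intro nn_integral_mono_AE) (auto elim!: eventually_mono simp: indicator_def ennreal_leI)
    also have "\<dots> = ennreal c * emeasure \<nu> (L t)"
      by (simp add: nn_integral_cmult_indicator mult.commute)
    finally show ?thesis using emu that(2) mu_nn by (simp add: ennreal_mult)
  qed
  have avgE_ge: "ennreal (c * mu t) \<le> avgE t" if "AE z in \<nu>. z \<in> L t \<longrightarrow> c \<le> \<psi>r z" "0 \<le> c" for t c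
  proof -
    have "ennreal (c * mu t) = ennreal c * emeasure \<nu> (L t)" using emu that(2) mu_nn by (simp add: ennreal_mult)
    also have "\<dots> = (\<integral>\<^sup>+z. indicator (L t) z * ennreal c \<partial>\<nu>)"
      by (simp add: nn_integral_cmult_indicator mult.commute)
    also have "\<dots> \<le> avgE t"
      unfolding avgE_def using that(1)
      by (intro nn_integral_mono_AE) (auto elim!: eventually_mono simp: indicator_def ennreal_leI)
    finally show ?thesis .
  qed
  have avgE_fin: "avgE t = ennreal (enn2real (avgE t))" for t
  proof -
    have "AE z in \<nu>. z \<in> L t \<longrightarrow> \<psi>r z \<le> 1" using \<psi>b by simp
    from avgE_le[OF this] have "avgE t \<le> ennreal (mu t)" by simp
    then have "avgE t < top" using ennreal_less_top le_less_trans by blast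
    then show ?thesis by simp
  qed
  have avgE_top: "avgE t < top" for t using avgE_fin[of t] by (metis ennreal_less_top)
  have le_real: "enn2real (avgE t) \<le> x" if "avgE t \<le> ennreal x" "0 \<le> x" for t x
    using enn2real_mono[OF that(1)] that(2) by simp
  have ge_real: "x \<le> enn2real (avgE t)" if "ennreal x \<le> avgE t" "0 \<le> x" for t x
    using enn2real_mono[OF that(1) avgE_top] that(2) by simp
  define g where "g t = (if mu t \<noteq> 0 then enn2real (avgE t) / mu t else \<psi>r (zs t))" for t
  have G1: "g t \<le> \<psi>r (zs t)" for t
  proof (cases "mu t = 0")
    case False
    have "AE z in \<nu>. z \<in> L t \<longrightarrow> \<psi>r z \<le> \<psi>r (zs t)"
      using AE01 by (rule eventually_mono) (auto simp: L_def intro!: monoD[OF \<psi>mono] F1)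
    from avgE_le[OF this] \<psi>b have "enn2real (avgE t) \<le> \<psi>r (zs t) * mu t"
      by (intro le_real) (simp_all add: mult_nonneg_nonneg mu_nn)
    then show ?thesis using False mu_nn unfolding g_def by (simp add: divide_le_eq less_le)
  qed (simp add: g_def)
  have G2: "\<psi>r (zs t) \<le> g t'" if "t < t'" for t t'
  proof (cases "mu t' = 0")
    case False
    have "AE z in \<nu>. z \<in> L t' \<longrightarrow> \<psi>r (zs t) \<le> \<psi>r z"
      using AE01 by (rule eventually_mono) (use that in \<open>auto simp: L_def intro!: monoD[OF \<psi>mono] F2\<close>)
    from avgE_ge[OF this] \<psi>b have "\<psi>r (zs t) * mu t' \<le> enn2real (avgE t')"
      by (intro ge_real) (simp_all add: mult_nonneg_nonneg mu_nn)
    then show ?thesis using False mu_nn unfolding g_def by (simp add: le_divide_eq less_le)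
  next
    case True
    then show ?thesis unfolding g_def using monoD[OF \<psi>mono F3[of t t']] that by simp
  qed
  have gmono: "mono g"
  proof (rule monoI)
    fix t t' :: real assume "t \<le> t'"
    then show "g t \<le> g t'"
      using G1[of t] G2[of t t'] by (cases "t = t'") auto
  qed
  have gb: "0 \<le> g t \<and> g t \<le> 1" for t
  proof (cases "mu t = 0")
    case False
    have "AE z in \<nu>. z \<in> L t \<longrightarrow> \<psi>r z \<le> 1" using \<psi>b by simp
    from avgE_le[OF this] have "enn2real (avgE t) \<le> mu t"
      by (intro le_real) (simp_all add: mu_nn)
    then show ?thesis using False mu_nn unfolding g_def by (simp add: divide_le_eq less_le)
  qed (simp add: g_def \<psi>b)
  have key: "(\<integral>\<^sup>+z. indicator B (H z) * ennreal (\<psi>r z) \<partial>\<nu>) = (\<integral>\<^sup>+z. indicator B (H z) * ennreal (g (H z)) \<partial>\<nu>)"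
    if B[measurable]: "B \<in> sets borel" for B
  proof -
    have Tb[measurable]: "T \<in> sets borel" by (rule sets.countable[OF _ cT]) simp
    define P where "P = H -` T"
    have Pm[measurable]: "P \<in> sets \<nu>" unfolding P_def using measurable_sets[OF Hm' Tb] by simp
    have gm[measurable]: "g \<in> borel_measurable borel" using gmono by (rule borel_measurable_mono)
    have splt: "(\<integral>\<^sup>+z. f z \<partial>\<nu>) = (\<integral>\<^sup>+z. indicator (B \<inter> T) (H z) * f z \<partial>\<nu>) + (\<integral>\<^sup>+z. f z * indicator (- P) z \<partial>\<nu>)"
      if [measurable]: "f \<in> borel_measurable \<nu>" and fB: "\<And>z. H z \<notin> B \<Longrightarrow> f z = 0" for f
    proof -
      have "(\<integral>\<^sup>+z. f z \<partial>\<nu>) = (\<integral>\<^sup>+z. indicator (B \<inter> T) (H z) * f z + f z * indicator (- P) z \<partial>\<nu>)"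
        by (intro nn_integral_cong) (auto simp: indicator_def P_def fB)
      also have "\<dots> = (\<integral>\<^sup>+z. indicator (B \<inter> T) (H z) * f z \<partial>\<nu>) + (\<integral>\<^sup>+z. f z * indicator (- P) z \<partial>\<nu>)"
        by (rule nn_integral_add) measurable
      finally show ?thesis .
    qed
    have cnt: "(\<integral>\<^sup>+z. indicator (B \<inter> T) (H z) * f z \<partial>\<nu>) = (\<integral>\<^sup>+t. (\<integral>\<^sup>+z. f z * indicator (L t) z \<partial>\<nu>) \<partial>count_space (B \<inter> T))"
      if fm[measurable]: "f \<in> borel_measurable \<nu>" for f
    proof -
      define D where "D = distr (density \<nu> f) borel H"
      have eD: "emeasure D X = (\<integral>\<^sup>+z. f z * indicator (H -` X) z \<partial>\<nu>)" if [measurable]: "X \<in> sets borel" for X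
      proof -
        have "H -` X \<in> sets \<nu>" using measurable_sets[OF Hm' that] by simp
        then show ?thesis unfolding D_def
          by (subst emeasure_distr) (simp_all add: emeasure_density cong: measurable_cong_sets)
      qed
      have "(\<integral>\<^sup>+z. indicator (B \<inter> T) (H z) * f z \<partial>\<nu>) = emeasure D (B \<inter> T)"
        by (subst eD) (auto intro!: nn_integral_cong simp: indicator_def)
      also have "\<dots> = (\<integral>\<^sup>+t. emeasure D {t} \<partial>count_space (B \<inter> T))"
        by (rule emeasure_countable_singleton) (auto simp: D_def intro: countable_subset[OF _ cT])
      also have "\<dots> = (\<integral>\<^sup>+t. (\<integral>\<^sup>+z. f z * indicator (L t) z \<partial>\<nu>) \<partial>count_space (B \<inter> T))"
        by (intro nn_integral_cong) (simp add: eD L_def)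
      finally show ?thesis .
    qed
    have termeq: "(\<integral>\<^sup>+z. ennreal (\<psi>r z) * indicator (L t) z \<partial>\<nu>) = (\<integral>\<^sup>+z. ennreal (g (H z)) * indicator (L t) z \<partial>\<nu>)"
      if t: "t \<in> T" for t
    proof -
      have mu0: "mu t \<noteq> 0" "0 < mu t" using t mu_nn unfolding T_def by (auto simp: less_le)
      have "(\<integral>\<^sup>+z. ennreal (\<psi>r z) * indicator (L t) z \<partial>\<nu>) = avgE t"
        unfolding avgE_def by (simp add: mult.commute)
      also have "\<dots> = ennreal (g t * mu t)"
        using mu0 by (subst avgE_fin) (simp add: g_def)
      also have "\<dots> = ennreal (g t) * emeasure \<nu> (L t)"
        using emu gb mu_nn by (simp add: ennreal_mult)
      also have "\<dots> = (\<integral>\<^sup>+z. ennreal (g t) * indicator (L t) z \<partial>\<nu>)"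
        by (simp add: nn_integral_cmult_indicator)
      also have "\<dots> = (\<integral>\<^sup>+z. ennreal (g (H z)) * indicator (L t) z \<partial>\<nu>)"
        by (intro nn_integral_cong) (auto simp: indicator_def L_def)
      finally show ?thesis .
    qed
    have rest: "(\<integral>\<^sup>+z. indicator B (H z) * ennreal (\<psi>r z) * indicator (- P) z \<partial>\<nu>)
        = (\<integral>\<^sup>+z. indicator B (H z) * ennreal (g (H z)) * indicator (- P) z \<partial>\<nu>)"
    proof (rule nn_integral_cong_AE)
      show "AE z in \<nu>. indicator B (H z) * ennreal (\<psi>r z) * indicator (- P) z
          = indicator B (H z) * ennreal (g (H z)) * indicator (- P) z"
        using AE01
      proof (rule eventually_mono)
        fix z :: real assume z: "0 < z \<and> z < 1"
        show "indicator B (H z) * ennreal (\<psi>r z) * indicator (- P) z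
          = indicator B (H z) * ennreal (g (H z)) * indicator (- P) z"
        proof (cases "z \<in> P")
          case False
          then have "mu (H z) = 0" unfolding P_def T_def by simp
          then have "g (H z) = \<psi>r z" using F4[of z] z unfolding g_def by simp
          then show ?thesis by simp
        qed simp
      qed
    qed
    have "(\<integral>\<^sup>+z. indicator B (H z) * ennreal (\<psi>r z) \<partial>\<nu>)
        = (\<integral>\<^sup>+z. indicator (B \<inter> T) (H z) * (indicator B (H z) * ennreal (\<psi>r z)) \<partial>\<nu>)
          + (\<integral>\<^sup>+z. indicator B (H z) * ennreal (\<psi>r z) * indicator (- P) z \<partial>\<nu>)"
      by (rule splt) (auto simp: indicator_def)
    also have "(\<integral>\<^sup>+z. indicator (B \<inter> T) (H z) * (indicator B (H z) * ennreal (\<psi>r z)) \<partial>\<nu>)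
        = (\<integral>\<^sup>+z. indicator (B \<inter> T) (H z) * (indicator B (H z) * ennreal (g (H z))) \<partial>\<nu>)"
    proof -
      have e1: "(\<integral>\<^sup>+z. indicator (B \<inter> T) (H z) * (indicator B (H z) * ennreal (\<psi>r z)) \<partial>\<nu>)
          = (\<integral>\<^sup>+z. indicator (B \<inter> T) (H z) * ennreal (\<psi>r z) \<partial>\<nu>)"
        by (intro nn_integral_cong) (auto simp: indicator_def)
      have e2: "(\<integral>\<^sup>+z. indicator (B \<inter> T) (H z) * (indicator B (H z) * ennreal (g (H z))) \<partial>\<nu>)
          = (\<integral>\<^sup>+z. indicator (B \<inter> T) (H z) * ennreal (g (H z)) \<partial>\<nu>)"
        by (intro nn_integral_cong) (auto simp: indicator_def)
      show ?thesis unfolding e1 e2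
        by (subst (1 2) cnt) (auto intro!: nn_integral_cong termeq)
    qed
    also note rest
    also have "(\<integral>\<^sup>+z. indicator (B \<inter> T) (H z) * (indicator B (H z) * ennreal (g (H z))) \<partial>\<nu>)
          + (\<integral>\<^sup>+z. indicator B (H z) * ennreal (g (H z)) * indicator (- P) z \<partial>\<nu>)
        = (\<integral>\<^sup>+z. indicator B (H z) * ennreal (g (H z)) \<partial>\<nu>)"
      by (rule splt[symmetric]) (auto simp: indicator_def)
    finally show ?thesis .
  qed
  show ?thesis using gmono gb key by blast
qed

lemma Idx_nonempty:
  assumes C: "finite C" and k: "1 \<le> k" "k \<le> card C"
  shows "Idx C k \<noteq> {}"
proof -
  obtain j where j: "j \<in> C" using k card_gt_0_iff by fastforce
  have "k - 1 \<le> card (C - {j})" using j C k by simp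
  then obtain S where "S \<subseteq> C - {j}" "card S = k - 1" by (metis obtain_subset_with_card_n)
  then have "(j, S) \<in> Idx C k" using j unfolding Idx_def by auto
  then show ?thesis by auto
qed

lemma Psi_one: "Psi C k (\<lambda>_. 1) z = of_nat (card (Idx C k))"
proof -
  have "\<And>j. (\<integral>\<^sup>+s. 1 \<partial>Q (C - {j})) = 1"
    using prob_space.emeasure_space_1[OF prob_Q] by simp
  then show ?thesis unfolding Psi_def by (simp add: case_prod_beta)
qed

lemma Psi_le:
  assumes "\<And>x. \<psi> x \<le> 1"
  shows "Psi C k \<psi> z \<le> of_nat (card (Idx C k))"
proof -
  have "\<And>j f. (\<integral>\<^sup>+s. \<psi> (f s) \<partial>Q (C - {j})) \<le> 1"
  proof -
    fix j f
    have "(\<integral>\<^sup>+s. \<psi> (f s) \<partial>Q (C - {j})) \<le> (\<integral>\<^sup>+s. 1 \<partial>Q (C - {j}))"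
      by (intro nn_integral_mono assms)
    also have "\<dots> = 1" using prob_space.emeasure_space_1[OF prob_Q] by simp
    finally show "(\<integral>\<^sup>+s. \<psi> (f s) \<partial>Q (C - {j})) \<le> 1" .
  qed
  then have "Psi C k \<psi> z \<le> (\<Sum>x\<in>Idx C k. 1)"
    unfolding Psi_def by (intro sum_mono) (auto simp: case_prod_beta)
  then show ?thesis by simp
qed

lemma Tmap_PiE: "Tmap C j S z s \<in> PiE C (\<lambda>_. UNIV)"
  unfolding Tmap_def by simp

lemma Psi_mono:
  assumes C: "finite C"
    and \<psi>mono: "\<And>x y. x \<in> PiE C (\<lambda>_. UNIV) \<Longrightarrow> y \<in> PiE C (\<lambda>_. UNIV) \<Longrightarrow> (\<forall>l\<in>C. x l \<le> y l) \<Longrightarrow> \<psi> x \<le> \<psi> y"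
    and zz: "z \<le> z'"
  shows "Psi C k \<psi> z \<le> Psi C k \<psi> z'"
  unfolding Psi_def
proof (intro sum_mono, clarsimp)
  fix j S
  show "(\<integral>\<^sup>+s. \<psi> (Tmap C j S z s) \<partial>Q (C - {j})) \<le> (\<integral>\<^sup>+s. \<psi> (Tmap C j S z' s) \<partial>Q (C - {j}))"
  proof (rule nn_integral_mono_AE)
    show "AE s in Q (C - {j}). \<psi> (Tmap C j S z s) \<le> \<psi> (Tmap C j S z' s)"
      using AE_Q_good[of "C - {j}"] C
    apply -
    apply (drule meta_mp, simp)
    proof (elim eventually_mono, intro \<psi>mono Tmap_PiE ballI)
      fix s :: "nat \<Rightarrow> real" and l assume s: "(\<forall>l\<in>C - {j}. 0 < s l \<and> s l < 1) \<and> (\<forall>l\<in>C - {j}. \<forall>l'\<in>C - {j}. l \<noteq> l' \<longrightarrow> s l \<noteq> s l')" and l: "l \<in> C"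
      show "Tmap C j S z s l \<le> Tmap C j S z' s l"
      proof (cases "l = j")
        case False
        then have sl: "0 < s l" "s l < 1" using s l by auto
        have "z + (1 - z) * s l \<le> z' + (1 - z') * s l"
        proof -
          have "z * (1 - s l) \<le> z' * (1 - s l)" using zz sl by (intro mult_right_mono) auto
          then show ?thesis by (simp add: algebra_simps)
        qed
        then show ?thesis using False l zz sl unfolding Tmap_def by (auto intro: mult_right_mono)
      qed (use l zz in \<open>simp add: Tmap_def\<close>)
    qed
  qed
qed

lemma kth_meas_Q:
  assumes C: "finite C" and k: "1 \<le> k" "k \<le> card C"
  shows "kth_smallest k C \<in> borel_measurable (Q C)"
  using kth_measurable[OF C k, of "\<lambda>l w. w l" "Q C"] by (simp cong: measurable_cong_sets)

definition wgt :: "nat set \<Rightarrow> nat \<Rightarrow> real \<Rightarrow> real" where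
  "wgt C k z = z ^ (k - 1) * (1 - z) ^ (card C - k)"

lemma nu_density:
  assumes C: "finite C" and k: "1 \<le> k" "k \<le> card C"
  shows "distr (Q C) borel (kth_smallest k C) = density U01 (\<lambda>z. ennreal (wgt C k z) * of_nat (card (Idx C k)))"
proof (rule measure_eqI)
  note km[measurable] = kth_meas_Q[OF C k]
  show "sets (distr (Q C) borel (kth_smallest k C)) = sets (density U01 (\<lambda>z. ennreal (wgt C k z) * of_nat (card (Idx C k))))"
    by simp
  fix A assume "A \<in> sets (distr (Q C) borel (kth_smallest k C))"
  then have A[measurable]: "A \<in> sets borel" by simp
  have "emeasure (distr (Q C) borel (kth_smallest k C)) A = (\<integral>\<^sup>+u. indicator A (kth_smallest k C u) * 1 \<partial>Q C)"
    by (subst emeasure_distr) (auto simp: nn_integral_indicator[symmetric] intro!: nn_integral_cong simp del: nn_integral_indicator split: split_indicator)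
  also have "\<dots> = (\<integral>\<^sup>+z. indicator A z * ennreal (wgt C k z) * Psi C k (\<lambda>_. 1) z \<partial>U01)"
    unfolding wgt_def by (rule stepA[OF C k _ A]) simp
  also have "\<dots> = emeasure (density U01 (\<lambda>z. ennreal (wgt C k z) * of_nat (card (Idx C k)))) A"
    by (subst emeasure_density) (auto simp: Psi_one mult_ac wgt_def)
  finally show "emeasure (distr (Q C) borel (kth_smallest k C)) A = emeasure (density U01 (\<lambda>z. ennreal (wgt C k z) * of_nat (card (Idx C k)))) A" .
qed

lemma nu_pos:
  assumes C: "finite C" and k: "1 \<le> k" "k \<le> card C" and ab: "0 < a" "a < b" "b \<le> 1"
  shows "emeasure (distr (Q C) borel (kth_smallest k C)) {a..b} \<noteq> 0"
proof
  define N where "N = card (Idx C k)"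
  have N: "0 < N" using Idx_nonempty[OF C k] finite_Idx[OF C] unfolding N_def by (simp add: card_gt_0_iff)
  assume "emeasure (distr (Q C) borel (kth_smallest k C)) {a..b} = 0"
  then have "(\<integral>\<^sup>+z. ennreal (wgt C k z) * of_nat N * indicator {a..b} z \<partial>U01) = 0"
    unfolding nu_density[OF C k] N_def by (subst (asm) emeasure_density) (auto simp: wgt_def)
  then have "AE z in U01. ennreal (wgt C k z) * of_nat N * indicator {a..b} z = 0"
    by (subst (asm) nn_integral_0_iff_AE) (auto simp: wgt_def)
  then have "AE z in lborel. z \<in> {0..1} \<longrightarrow> ennreal (wgt C k z) * of_nat N * indicator {a..b} z = 0"
    by (subst (asm) AE_uniform_measure) auto
  then have "AE z in lborel. z \<notin> {a<..<b}"
  proof (rule eventually_mono)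
    fix z :: real assume h: "z \<in> {0..1} \<longrightarrow> ennreal (wgt C k z) * of_nat N * indicator {a..b} z = 0"
    show "z \<notin> {a<..<b}"
    proof
      assume z: "z \<in> {a<..<b}"
      then have "0 < wgt C k z" using ab unfolding wgt_def by auto
      then show False using h z ab N by (auto simp: indicator_def)
    qed
  qed
  then have "emeasure lborel {a<..<b} = 0"
    by (subst (asm) AE_iff_measurable[OF _ refl]) (auto simp: greaterThanLessThan_def greaterThan_def lessThan_def Int_def)
  then show False using ab by simp
qed

lemma core:
  fixes \<psi> :: "(nat \<Rightarrow> real) \<Rightarrow> ennreal" and H :: "real \<Rightarrow> real"
  assumes C: "finite C" and k: "1 \<le> k" "k \<le> card C"
    and \<psi>[measurable]: "\<psi> \<in> borel_measurable (PiM C (\<lambda>_. borel))"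
    and \<psi>1: "\<And>x. \<psi> x \<le> 1"
    and \<psi>mono: "\<And>x y. x \<in> PiE C (\<lambda>_. UNIV) \<Longrightarrow> y \<in> PiE C (\<lambda>_. UNIV) \<Longrightarrow> (\<forall>l\<in>C. x l \<le> y l) \<Longrightarrow> \<psi> x \<le> \<psi> y"
    and Hmono: "mono H"
  shows "\<exists>g. mono g \<and> (\<forall>t. 0 \<le> g t \<and> g t \<le> 1) \<and>
    (\<forall>B\<in>sets borel. (\<integral>\<^sup>+u. indicator B (H (kth_smallest k C u)) * \<psi> u \<partial>Q C)
        = (\<integral>\<^sup>+u. indicator B (H (kth_smallest k C u)) * ennreal (g (H (kth_smallest k C u))) \<partial>Q C))"
proof -
  note km[measurable] = kth_meas_Q[OF C k]
  have Hm[measurable]: "H \<in> borel_measurable borel" using Hmono by (rule borel_measurable_mono)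
  define N where "N = card (Idx C k)"
  have N: "0 < N" using Idx_nonempty[OF C k] finite_Idx[OF C] unfolding N_def by (simp add: card_gt_0_iff)
  define \<nu> where "\<nu> = distr (Q C) borel (kth_smallest k C)"
  have nu_dens: "\<nu> = density U01 (\<lambda>z. ennreal (wgt C k z) * of_nat N)"
    unfolding \<nu>_def N_def by (rule nu_density[OF C k])
  define \<psi>r where "\<psi>r z = enn2real (Psi C k \<psi> z / of_nat N)" for z
  have Psim[measurable]: "Psi C k \<psi> \<in> borel_measurable borel" by (rule Psi_measurable[OF \<psi>])
  have Psi_le: "Psi C k \<psi> z \<le> of_nat N" for z unfolding N_def by (rule Psi_le[OF \<psi>1])
  have \<psi>r_eq: "ennreal (\<psi>r z) = Psi C k \<psi> z / of_nat N" for z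
  proof -
    have "Psi C k \<psi> z / of_nat N \<le> of_nat N / of_nat N" by (intro divide_right_mono_ennreal Psi_le)
    also have "\<dots> = 1" using N by (simp add: divide_eq_1_ennreal)
    finally have "Psi C k \<psi> z / of_nat N < top" by (simp add: le_less_trans)
    then show ?thesis unfolding \<psi>r_def by simp
  qed
  have \<psi>r_b: "0 \<le> \<psi>r z \<and> \<psi>r z \<le> 1" for z
  proof -
    have "Psi C k \<psi> z / of_nat N \<le> of_nat N / of_nat N" by (intro divide_right_mono_ennreal Psi_le)
    also have "\<dots> = 1" using N by (simp add: divide_eq_1_ennreal)
    finally have "ennreal (\<psi>r z) \<le> 1" using \<psi>r_eq by simp
    then show ?thesis unfolding \<psi>r_def by (simp add: enn2real_nonneg)
  qed
  have \<psi>r_mono: "mono \<psi>r"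
  proof (rule monoI)
    fix z z' :: real assume "z \<le> z'"
    then have "Psi C k \<psi> z / of_nat N \<le> Psi C k \<psi> z' / of_nat N"
      by (intro divide_right_mono_ennreal Psi_mono[OF C \<psi>mono])
    then have "ennreal (\<psi>r z) \<le> ennreal (\<psi>r z')" unfolding \<psi>r_eq .
    then show "\<psi>r z \<le> \<psi>r z'" using \<psi>r_b by (simp add: ennreal_le_iff)
  qed
  have A2: "(\<integral>\<^sup>+u. indicator A (kth_smallest k C u) * \<psi> u \<partial>Q C) = (\<integral>\<^sup>+z. indicator A z * ennreal (\<psi>r z) \<partial>\<nu>)"
    if A[measurable]: "A \<in> sets borel" for A
  proof -
    have "(\<integral>\<^sup>+z. indicator A z * ennreal (\<psi>r z) \<partial>\<nu>)
        = (\<integral>\<^sup>+z. ennreal (wgt C k z) * of_nat N * (indicator A z * (Psi C k \<psi> z / of_nat N)) \<partial>U01)"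
      unfolding nu_dens \<psi>r_eq by (subst nn_integral_density) (auto simp: wgt_def)
    also have "\<dots> = (\<integral>\<^sup>+z. indicator A z * ennreal (wgt C k z) * Psi C k \<psi> z \<partial>U01)"
    proof (rule nn_integral_cong)
      fix z
      have "of_nat N * (Psi C k \<psi> z / of_nat N) = (Psi C k \<psi> z :: ennreal)"
        using N by (simp add: ennreal_times_divide mult.commute[of "of_nat N"] ennreal_mult_divide_eq)
      then show "ennreal (wgt C k z) * of_nat N * (indicator A z * (Psi C k \<psi> z / of_nat N))
          = indicator A z * ennreal (wgt C k z) * Psi C k \<psi> z"
        by (metis (no_types, lifting) mult.assoc mult.left_commute)
    qed
    also have "\<dots> = (\<integral>\<^sup>+u. indicator A (kth_smallest k C u) * \<psi> u \<partial>Q C)"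
      unfolding wgt_def by (rule stepA[OF C k \<psi> A, symmetric])
    finally show ?thesis ..
  qed
  have probnu: "prob_space \<nu>" unfolding \<nu>_def
    by (rule prob_space.prob_space_distr[OF prob_Q km])
  have setsnu: "sets \<nu> = sets borel" unfolding \<nu>_def by simp
  have AE01: "AE z in \<nu>. 0 < z \<and> z < 1"
    unfolding \<nu>_def
  proof (subst AE_distr_iff)
    show "AE u in Q C. 0 < kth_smallest k C u \<and> kth_smallest k C u < 1"
      using AE_Q_good[OF C]
    proof (rule eventually_mono)
      fix u :: "nat \<Rightarrow> real" assume u: "(\<forall>l\<in>C. 0 < u l \<and> u l < 1) \<and> (\<forall>l\<in>C. \<forall>l'\<in>C. l \<noteq> l' \<longrightarrow> u l \<noteq> u l')"
      obtain j where "j \<in> C" "kth_smallest k C u = u j" using kth_exists[OF C k, of u] by blast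
      then show "0 < kth_smallest k C u \<and> kth_smallest k C u < 1" using u by auto
    qed
  qed auto
  have posnu: "emeasure \<nu> {a..b} \<noteq> 0" if "0 < a" "a < b" "b \<le> 1" for a b
    unfolding \<nu>_def by (rule nu_pos[OF C k that])
  obtain g where g: "mono g" "\<forall>t. 0 \<le> g t \<and> g t \<le> 1"
    "\<forall>B\<in>sets borel. (\<integral>\<^sup>+z. indicator B (H z) * ennreal (\<psi>r z) \<partial>\<nu>) = (\<integral>\<^sup>+z. indicator B (H z) * ennreal (g (H z)) \<partial>\<nu>)"
    using stepB[OF probnu setsnu AE01 posnu \<psi>r_mono \<psi>r_b Hmono] by blast
  have gm[measurable]: "g \<in> borel_measurable borel" using g(1) by (rule borel_measurable_mono)
  show ?thesis
  proof (intro exI conjI ballI)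
    show "mono g" "\<forall>t. 0 \<le> g t \<and> g t \<le> 1" using g by auto
    fix B :: "real set" assume B[measurable]: "B \<in> sets borel"
    have "(\<integral>\<^sup>+u. indicator B (H (kth_smallest k C u)) * \<psi> u \<partial>Q C) = (\<integral>\<^sup>+u. indicator (H -` B) (kth_smallest k C u) * \<psi> u \<partial>Q C)"
      by (simp add: indicator_def)
    also have "\<dots> = (\<integral>\<^sup>+z. indicator (H -` B) z * ennreal (\<psi>r z) \<partial>\<nu>)"
      by (rule A2) (use measurable_sets[OF Hm B] in simp)
    also have "\<dots> = (\<integral>\<^sup>+z. indicator B (H z) * ennreal (\<psi>r z) \<partial>\<nu>)"
      by (simp add: indicator_def)
    also have "\<dots> = (\<integral>\<^sup>+z. indicator B (H z) * ennreal (g (H z)) \<partial>\<nu>)" using g(3) B by blast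
    also have "\<dots> = (\<integral>\<^sup>+u. indicator B (H (kth_smallest k C u)) * ennreal (g (H (kth_smallest k C u))) \<partial>Q C)"
      unfolding \<nu>_def by (subst nn_integral_distr) auto
    finally show "(\<integral>\<^sup>+u. indicator B (H (kth_smallest k C u)) * \<psi> u \<partial>Q C)
        = (\<integral>\<^sup>+u. indicator B (H (kth_smallest k C u)) * ennreal (g (H (kth_smallest k C u))) \<partial>Q C)" .
  qed
qed

lemma kth_cong:
  assumes "\<And>l. l \<in> C \<Longrightarrow> x l = y l"
  shows "kth_smallest k C x = kth_smallest k C y"
proof (cases "finite C")
  case True
  then have "map x (sorted_list_of_set C) = map y (sorted_list_of_set C)"
    using assms by (intro map_cong) auto
  then show ?thesis unfolding kth_smallest_def by (rule arg_cong[where f="\<lambda>l. sort l ! (k - 1)"])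
qed (simp add: kth_smallest_def)

lemma tp_cong:
  assumes "\<And>l. l \<in> desc_closure E v \<Longrightarrow> x l = y l"
  shows "tilde_p E G k v x = tilde_p E G k v y"
  unfolding tilde_p_def f_stat_def using kth_cong[OF assms] by simp

lemma F_cdf_mono:
  assumes C: "finite (desc_closure E v)" and k: "1 \<le> k v" "k v \<le> card (desc_closure E v)"
    and G: "mono (G v)"
  shows "mono (F_cdf E G k v)"
proof (rule monoI)
  fix t t' :: real assume tt: "t \<le> t'"
  let ?C = "desc_closure E v"
  have Gm[measurable]: "G v \<in> borel_measurable borel" using G by (rule borel_measurable_mono)
  have km[measurable]: "kth_smallest (k v) ?C \<in> borel_measurable (Q ?C)" by (rule kth_meas_Q[OF C k])
  have fm[measurable]: "f_stat E G k v \<in> borel_measurable (Q ?C)"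
    unfolding f_stat_def[abs_def] by measurable
  interpret P: prob_space "Q ?C" by (rule prob_Q)
  show "F_cdf E G k v t \<le> F_cdf E G k v t'"
    unfolding F_cdf_def
    by (rule P.finite_measure_mono) (use tt in auto)
qed

lemma tp_mono:
  assumes C: "finite (desc_closure E v)" and k: "1 \<le> k v" "k v \<le> card (desc_closure E v)"
    and G: "mono (G v)" and le: "\<And>l. l \<in> desc_closure E v \<Longrightarrow> x l \<le> y l"
  shows "tilde_p E G k v x \<le> tilde_p E G k v y"
  unfolding tilde_p_def f_stat_def
  by (intro monoD[OF F_cdf_mono[where E=E and v=v and k=k and G=G, OF C k G]] monoD[OF G] kth_mono[OF C k le])

lemma tp_meas:
  assumes C: "finite (desc_closure E v)" and k: "1 \<le> k v" "k v \<le> card (desc_closure E v)"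
    and G: "mono (G v)" and Y: "\<And>l. l \<in> desc_closure E v \<Longrightarrow> (\<lambda>w. Y l w) \<in> borel_measurable M"
  shows "(\<lambda>w. tilde_p E G k v (\<lambda>l. Y l w)) \<in> borel_measurable M"
proof -
  have [measurable]: "G v \<in> borel_measurable borel" using G by (rule borel_measurable_mono)
  have [measurable]: "F_cdf E G k v \<in> borel_measurable borel" using F_cdf_mono[where E=E and v=v and k=k and G=G, OF C k G] by (rule borel_measurable_mono)
  have [measurable]: "(\<lambda>w. kth_smallest (k v) (desc_closure E v) (\<lambda>l. Y l w)) \<in> borel_measurable M"
    by (rule kth_measurable[OF C k Y])
  show ?thesis unfolding tilde_p_def f_stat_def by measurable
qed

lemma law:
  fixes M :: "'a measure" and p :: "nat \<Rightarrow> 'a \<Rightarrow> real" and F :: "(nat \<Rightarrow> real) \<Rightarrow> ennreal"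
  assumes prob: "prob_space M" and NSR: "N = Snull \<union> R" "Snull \<inter> R = {}" and finN: "finite N"
    and ne: "Snull \<noteq> {}"
    and rv: "\<And>v. v \<in> N \<Longrightarrow> p v \<in> borel_measurable M"
    and unif: "\<And>v. v \<in> Snull \<Longrightarrow> distr M borel (p v) = U01"
    and indep_null: "prob_space.indep_vars M (\<lambda>_. borel) p Snull"
    and indep_nonnull: "prob_space.indep_var M (PiM Snull (\<lambda>_. borel)) (\<lambda>\<omega>. \<lambda>v\<in>Snull. p v \<omega>)
          (PiM R (\<lambda>_. borel)) (\<lambda>\<omega>. \<lambda>v\<in>R. p v \<omega>)"
    and CS: "C \<subseteq> Snull"
    and F[measurable]: "F \<in> borel_measurable (PiM N (\<lambda>_. borel))"
  shows "(\<integral>\<^sup>+\<omega>. F (\<lambda>j\<in>N. p j \<omega>) \<partial>M) = (\<integral>\<^sup>+u. (\<integral>\<^sup>+s. (\<integral>\<^sup>+b. F (merge Snull R (merge C (Snull - C) (u, s), b))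
       \<partial>distr M (PiM R (\<lambda>_. borel)) (\<lambda>\<omega>. \<lambda>v\<in>R. p v \<omega>)) \<partial>Q (Snull - C)) \<partial>Q C)"
    and "(\<lambda>u. (\<integral>\<^sup>+s. (\<integral>\<^sup>+b. F (merge Snull R (merge C (Snull - C) (u, s), b))
       \<partial>distr M (PiM R (\<lambda>_. borel)) (\<lambda>\<omega>. \<lambda>v\<in>R. p v \<omega>)) \<partial>Q (Snull - C))) \<in> borel_measurable (Q C)"
proof -
  interpret P: prob_space M by (rule prob)
  define Lr where "Lr = distr M (PiM R (\<lambda>_. borel)) (\<lambda>\<omega>. \<lambda>v\<in>R. p v \<omega>)"
  define S2 where "S2 = Snull - C"
  have finS: "finite Snull" "finite R" "finite C" "finite S2" using finN NSR CS unfolding S2_def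
    by (auto intro: finite_subset)
  have CS2: "C \<inter> S2 = {}" "C \<union> S2 = Snull" using CS unfolding S2_def by auto
  have rvS[measurable]: "(\<lambda>\<omega>. \<lambda>v\<in>Snull. p v \<omega>) \<in> measurable M (PiM Snull (\<lambda>_. borel))"
    using rv NSR by (intro measurable_restrict) auto
  have rvR[measurable]: "(\<lambda>\<omega>. \<lambda>v\<in>R. p v \<omega>) \<in> measurable M (PiM R (\<lambda>_. borel))"
    using rv NSR by (intro measurable_restrict) auto
  interpret Lr: prob_space Lr unfolding Lr_def by (rule P.prob_space_distr[OF rvR])
  interpret QS: prob_space "Q Snull" by (rule prob_Q)
  interpret QS2: prob_space "Q S2" by (rule prob_Q)
  interpret PL: pair_sigma_finite "Q Snull" Lr by unfold_locales
  have lawS: "distr M (PiM Snull (\<lambda>_. borel)) (\<lambda>\<omega>. \<lambda>v\<in>Snull. p v \<omega>) = Q Snull"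
  proof -
    have "distr M (PiM Snull (\<lambda>_. borel)) (\<lambda>\<omega>. \<lambda>v\<in>Snull. p v \<omega>) = PiM Snull (\<lambda>v. distr M borel (p v))"
      using P.indep_vars_iff_distr_eq_PiM'[where M'="\<lambda>_. borel" and X=p, OF ne] indep_null rv NSR by auto
    also have "\<dots> = Q Snull" using unif by (intro PiM_cong) auto
    finally show ?thesis .
  qed
  have joint: "distr M (PiM Snull (\<lambda>_. borel) \<Otimes>\<^sub>M PiM R (\<lambda>_. borel)) (\<lambda>\<omega>. (\<lambda>v\<in>Snull. p v \<omega>, \<lambda>v\<in>R. p v \<omega>))
      = Q Snull \<Otimes>\<^sub>M Lr"
    using P.indep_var_distribution_eq[THEN iffD1, OF indep_nonnull] lawS unfolding Lr_def by simp
  have mergeeq: "(\<lambda>j\<in>N. p j \<omega>) = merge Snull R (\<lambda>v\<in>Snull. p v \<omega>, \<lambda>v\<in>R. p v \<omega>)" for \<omega>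
    using NSR by (auto simp: fun_eq_iff merge_def)
  have Fm2: "(\<lambda>x. F (merge Snull R x)) \<in> borel_measurable (PiM Snull (\<lambda>_. borel) \<Otimes>\<^sub>M PiM R (\<lambda>_. borel))"
    using measurable_comp[OF measurable_merge F[unfolded NSR(1)]] by (simp add: comp_def)
  have Fm2': "(\<lambda>x. F (merge Snull R x)) \<in> borel_measurable (Q Snull \<Otimes>\<^sub>M Lr)"
    using Fm2 by (simp cong: measurable_cong_sets add: Lr_def)
  have "(\<integral>\<^sup>+\<omega>. F (\<lambda>j\<in>N. p j \<omega>) \<partial>M) = (\<integral>\<^sup>+\<omega>. F (merge Snull R (\<lambda>v\<in>Snull. p v \<omega>, \<lambda>v\<in>R. p v \<omega>)) \<partial>M)"
    by (simp add: mergeeq)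
  also have "\<dots> = (\<integral>\<^sup>+x. F (merge Snull R x) \<partial>distr M (PiM Snull (\<lambda>_. borel) \<Otimes>\<^sub>M PiM R (\<lambda>_. borel)) (\<lambda>\<omega>. (\<lambda>v\<in>Snull. p v \<omega>, \<lambda>v\<in>R. p v \<omega>)))"
    by (subst nn_integral_distr) (auto intro: Fm2)
  also have "\<dots> = (\<integral>\<^sup>+x. F (merge Snull R x) \<partial>(Q Snull \<Otimes>\<^sub>M Lr))" unfolding joint ..
  also have "\<dots> = (\<integral>\<^sup>+a. (\<integral>\<^sup>+b. F (merge Snull R (a, b)) \<partial>Lr) \<partial>Q Snull)"
    using Lr.nn_integral_fst[OF Fm2'] by simp
  also have "\<dots> = (\<integral>\<^sup>+u. (\<integral>\<^sup>+s. (\<integral>\<^sup>+b. F (merge Snull R (merge C S2 (u, s), b)) \<partial>Lr) \<partial>Q S2) \<partial>Q C)"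
  proof -
    have m: "(\<lambda>a. \<integral>\<^sup>+b. F (merge Snull R (a, b)) \<partial>Lr) \<in> borel_measurable (Q (C \<union> S2))"
      unfolding CS2(2) using Lr.borel_measurable_nn_integral_fst[OF Fm2'] by simp
    show ?thesis
      using UP.product_nn_integral_fold[OF CS2(1) finS(3,4) m] unfolding CS2(2) .
  qed
  finally show "(\<integral>\<^sup>+\<omega>. F (\<lambda>j\<in>N. p j \<omega>) \<partial>M) = (\<integral>\<^sup>+u. (\<integral>\<^sup>+s. (\<integral>\<^sup>+b. F (merge Snull R (merge C (Snull - C) (u, s), b))
       \<partial>distr M (PiM R (\<lambda>_. borel)) (\<lambda>\<omega>. \<lambda>v\<in>R. p v \<omega>)) \<partial>Q (Snull - C)) \<partial>Q C)"
    unfolding Lr_def S2_def .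
  show "(\<lambda>u. (\<integral>\<^sup>+s. (\<integral>\<^sup>+b. F (merge Snull R (merge C (Snull - C) (u, s), b))
       \<partial>distr M (PiM R (\<lambda>_. borel)) (\<lambda>\<omega>. \<lambda>v\<in>R. p v \<omega>)) \<partial>Q (Snull - C))) \<in> borel_measurable (Q C)"
  proof -
    have m1: "(\<lambda>x. F (merge Snull R (merge C S2 (fst (fst x), snd (fst x)), snd x))) \<in> borel_measurable ((Q C \<Otimes>\<^sub>M Q S2) \<Otimes>\<^sub>M Lr)"
    proof -
      have "(\<lambda>x. merge C S2 (fst (fst x), snd (fst x))) \<in> measurable ((Q C \<Otimes>\<^sub>M Q S2) \<Otimes>\<^sub>M Lr) (Q Snull)"
        unfolding CS2(2)[symmetric] by measurable
      then have pm: "(\<lambda>x. (merge C S2 (fst (fst x), snd (fst x)), snd x)) \<in> measurable ((Q C \<Otimes>\<^sub>M Q S2) \<Otimes>\<^sub>M Lr) (Q Snull \<Otimes>\<^sub>M Lr)"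
        by measurable
      show ?thesis using measurable_comp[OF pm Fm2'] by (simp add: comp_def)
    qed
    have m2: "(\<lambda>y. \<integral>\<^sup>+b. F (merge Snull R (merge C S2 (fst y, snd y), b)) \<partial>Lr) \<in> borel_measurable (Q C \<Otimes>\<^sub>M Q S2)"
      using Lr.borel_measurable_nn_integral_fst[OF m1] by simp
    have "(\<lambda>u. \<integral>\<^sup>+s. (\<integral>\<^sup>+b. F (merge Snull R (merge C S2 (u, s), b)) \<partial>Lr) \<partial>Q S2) \<in> borel_measurable (Q C)"
      using QS2.borel_measurable_nn_integral_fst[OF m2] by simp
    then show ?thesis unfolding Lr_def S2_def .
  qed
qed

theorem theorem2:
  fixes M :: "'a measure" and n :: nat and p :: "nat \<Rightarrow> 'a \<Rightarrow> real"
    and Snull :: "nat set" and E :: "(nat \<times> nat) set"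
    and G :: "nat \<Rightarrow> real \<Rightarrow> real" and k :: "nat \<Rightarrow> nat"
  assumes prob: "prob_space M"
    and dag_edges: "E \<subseteq> {..<n} \<times> {..<n}"
    and dag_acyclic: "acyclic E"
    and null_sub: "Snull \<subseteq> {..<n}"
    and hierarchy: "\<forall>v\<in>{..<n} - Snull. \<forall>w. (w, v) \<in> E\<^sup>+ \<longrightarrow> w \<notin> Snull"
    and rv: "\<forall>v<n. p v \<in> borel_measurable M"
    and unif: "\<forall>v\<in>Snull. distr M borel (p v) = uniform_measure lborel {0..1::real}"
    and indep_null: "prob_space.indep_vars M (\<lambda>_. borel) p Snull"
    and indep_nonnull: "prob_space.indep_var M
          (PiM Snull (\<lambda>_. borel)) (\<lambda>\<omega>. \<lambda>v\<in>Snull. p v \<omega>)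
          (PiM ({..<n} - Snull) (\<lambda>_. borel)) (\<lambda>\<omega>. \<lambda>v\<in>{..<n} - Snull. p v \<omega>)"
    and G_mono: "\<forall>v<n. mono (G v)"
    and k_range: "\<forall>v<n. 1 \<le> k v \<and> k v \<le> card (desc_closure E v)"
  shows "PRDS M {..<n} (\<lambda>v \<omega>. tilde_p E G k v (\<lambda>i. p i \<omega>)) Snull"
proof -
  interpret P: prob_space M by (rule prob)
  define N where "N = {..<n}"
  define R where "R = N - Snull"
  have finN: "finite N" by (simp add: N_def)
  have NSR: "N = Snull \<union> R" "Snull \<inter> R = {}" using null_sub by (auto simp: R_def N_def)
  have trN: "E\<^sup>+ \<subseteq> N \<times> N" using dag_edges unfolding N_def by (rule trancl_subset_Sigma)
  have dcN: "desc_closure E v \<subseteq> N" if "v \<in> N" for v using trN that by (auto simp: desc_closure_def)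
  have dcfin: "finite (desc_closure E v)" if "v \<in> N" for v using finite_subset[OF dcN[OF that] finN] .
  have kr: "1 \<le> k v" "k v \<le> card (desc_closure E v)" if "v \<in> N" for v using k_range that by (auto simp: N_def)
  have Gm: "mono (G v)" if "v \<in> N" for v using G_mono that by (auto simp: N_def)
  have rvN: "p v \<in> borel_measurable M" if "v \<in> N" for v using rv that by (auto simp: N_def)
  have tp_eq: "tilde_p E G k v (\<lambda>i. p i \<omega>) = tilde_p E G k v (\<lambda>j\<in>N. p j \<omega>)" if "v \<in> N" for v \<omega>
    by (rule tp_cong) (use dcN[OF that] in auto)
  have tpm: "(\<lambda>x. tilde_p E G k v x) \<in> borel_measurable (PiM N (\<lambda>_. borel))" if v: "v \<in> N" for v
  proof -
    have "(\<lambda>x. tilde_p E G k v (\<lambda>l. x l)) \<in> borel_measurable (PiM N (\<lambda>_. borel))"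
      by (rule tp_meas[where E=E and v=v and k=k and G=G and Y="\<lambda>l x. x l" and M="PiM N (\<lambda>_. borel)", OF dcfin[OF v] kr[OF v] Gm[OF v]])
         (use dcN[OF v] in auto)
    then show ?thesis by simp
  qed
  have Vhm: "(\<lambda>x. \<lambda>j\<in>N. tilde_p E G k j x) \<in> measurable (PiM N (\<lambda>_. borel)) (PiM N (\<lambda>_. borel))"
    by (rule measurable_restrict) (rule tpm)
  show ?thesis
    unfolding PRDS_def N_def[symmetric]
  proof (intro allI impI ballI)
    fix D i assume D: "nondecreasing_set N D \<and> D \<in> sets (PiM N (\<lambda>_. borel))" and i: "i \<in> Snull"

    have iN: "i \<in> N" using i null_sub by (auto simp: N_def)
    define C where "C = desc_closure E i"
    have CS: "C \<subseteq> Snull"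
    proof
      fix w assume w: "w \<in> C"
      show "w \<in> Snull"
      proof (cases "w = i")
        case False
        then have iw: "(i, w) \<in> E\<^sup>+" using w unfolding C_def desc_closure_def by auto
        then have "w \<in> N" using trN by auto
        show ?thesis
        proof (rule ccontr)
          assume "w \<notin> Snull"
          then have "w \<in> {..<n} - Snull" using \<open>w \<in> N\<close> by (auto simp: N_def)
          then show False using hierarchy iw i by blast
        qed
      qed (use i in simp)
    qed
    have finC: "finite C" unfolding C_def by (rule dcfin[OF iN])
    have kC: "1 \<le> k i" "k i \<le> card C" unfolding C_def using kr[OF iN] by auto
    define Hi where "Hi t = F_cdf E G k i (G i t)" for t
    have Hmono: "mono Hi"
      unfolding Hi_def using F_cdf_mono[where E=E and v=i and k=k and G=G, OF dcfin[OF iN] kr[OF iN] Gm[OF iN]] Gm[OF iN]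
      by (auto simp: mono_def)
    have hi_eq: "tilde_p E G k i x = Hi (kth_smallest (k i) C x)" for x
      unfolding tilde_p_def f_stat_def Hi_def C_def by simp
    define Lr where "Lr = distr M (PiM R (\<lambda>_. borel)) (\<lambda>\<omega>. \<lambda>v\<in>R. p v \<omega>)"
    have rvR: "(\<lambda>\<omega>. \<lambda>v\<in>R. p v \<omega>) \<in> measurable M (PiM R (\<lambda>_. borel))"
      using rvN NSR by (intro measurable_restrict) auto
    interpret Lr: prob_space Lr unfolding Lr_def by (rule P.prob_space_distr[OF rvR])
    interpret QS2: prob_space "Q (Snull - C)" by (rule prob_Q)
    define mm :: "(nat \<Rightarrow> real) \<Rightarrow> (nat \<Rightarrow> real) \<Rightarrow> (nat \<Rightarrow> real) \<Rightarrow> nat \<Rightarrow> real"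
      where "mm u s b = merge Snull R (merge C (Snull - C) (u, s), b)" for u s b
    have mmC: "mm u s b l = u l" if "l \<in> C" for u s b l
      using that CS unfolding mm_def by (auto simp: merge_def)
    have mm_le: "mm x s b l \<le> mm y s b l" if "\<forall>l\<in>C. x l \<le> y l" for x y s b l
      using that unfolding mm_def by (auto simp: merge_def)
    have law_i: "(\<integral>\<^sup>+\<omega>. F (\<lambda>j\<in>N. p j \<omega>) \<partial>M) = (\<integral>\<^sup>+u. (\<integral>\<^sup>+s. (\<integral>\<^sup>+b. F (mm u s b) \<partial>Lr) \<partial>Q (Snull - C)) \<partial>Q C)"
      "(\<lambda>u. (\<integral>\<^sup>+s. (\<integral>\<^sup>+b. F (mm u s b) \<partial>Lr) \<partial>Q (Snull - C))) \<in> borel_measurable (Q C)"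
      if "F \<in> borel_measurable (PiM N (\<lambda>_. borel))" for F
      using law[OF prob NSR finN _ rvN _ indep_null _ CS that] i unif indep_nonnull
      unfolding mm_def Lr_def R_def N_def by auto
    define Fd where "Fd x = (indicator D (\<lambda>j\<in>N. tilde_p E G k j x) :: ennreal)" for x
    have Fdm: "Fd \<in> borel_measurable (PiM N (\<lambda>_. borel))"
      unfolding Fd_def using measurable_comp[OF Vhm borel_measurable_indicator[OF D[THEN conjunct2]]]
      by (simp add: comp_def)
    define \<psi> where "\<psi> u = (\<integral>\<^sup>+s. (\<integral>\<^sup>+b. Fd (mm u s b) \<partial>Lr) \<partial>Q (Snull - C))" for u
    have \<psi>m: "\<psi> \<in> borel_measurable (PiM C (\<lambda>_. borel))"
      using law_i(2)[OF Fdm] unfolding \<psi>_def[abs_def] by (simp cong: measurable_cong_sets)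
    have \<psi>1: "\<psi> u \<le> 1" for u
    proof -
      have "\<psi> u \<le> (\<integral>\<^sup>+s. (\<integral>\<^sup>+b. 1 \<partial>Lr) \<partial>Q (Snull - C))"
        unfolding \<psi>_def Fd_def by (intro nn_integral_mono) (auto simp: indicator_def)
      also have "\<dots> = 1" using Lr.emeasure_space_1 QS2.emeasure_space_1 by simp
      finally show ?thesis .
    qed
    have \<psi>mono: "\<psi> x \<le> \<psi> y" if "x \<in> PiE C (\<lambda>_. UNIV)" "y \<in> PiE C (\<lambda>_. UNIV)" "\<forall>l\<in>C. x l \<le> y l" for x y
      unfolding \<psi>_def
    proof (intro nn_integral_mono)
      fix s b
      show "Fd (mm x s b) \<le> Fd (mm y s b)"
      proof (cases "(\<lambda>j\<in>N. tilde_p E G k j (mm x s b)) \<in> D")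
        case True
        have up: "\<forall>x\<in>D. \<forall>y\<in>PiE N (\<lambda>_. UNIV). (\<forall>i\<in>N. x i \<le> y i) \<longrightarrow> y \<in> D"
          using D[THEN conjunct1] unfolding nondecreasing_set_def by blast
        have le: "\<forall>j\<in>N. (\<lambda>j\<in>N. tilde_p E G k j (mm x s b)) j \<le> (\<lambda>j\<in>N. tilde_p E G k j (mm y s b)) j"
        proof
          fix j assume j: "j \<in> N"
          show "(\<lambda>j\<in>N. tilde_p E G k j (mm x s b)) j \<le> (\<lambda>j\<in>N. tilde_p E G k j (mm y s b)) j"
            using j tp_mono[where E=E and v=j and k=k and G=G, OF dcfin[OF j] kr[OF j] Gm[OF j] mm_le[OF that(3)]]
            by simp
        qed
        have "(\<lambda>j\<in>N. tilde_p E G k j (mm y s b)) \<in> D"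
        proof -
          have "(\<lambda>j\<in>N. tilde_p E G k j (mm y s b)) \<in> PiE N (\<lambda>_. UNIV)" by simp
          then show ?thesis using up True le by blast
        qed
        then show ?thesis unfolding Fd_def by (simp add: indicator_def)
      qed (simp add: Fd_def)
    qed
    obtain g where g: "mono g" "\<forall>t. 0 \<le> g t \<and> g t \<le> 1"
      "\<forall>B\<in>sets borel. (\<integral>\<^sup>+u. indicator B (Hi (kth_smallest (k i) C u)) * \<psi> u \<partial>Q C)
        = (\<integral>\<^sup>+u. indicator B (Hi (kth_smallest (k i) C u)) * ennreal (g (Hi (kth_smallest (k i) C u))) \<partial>Q C)"
      using core[OF finC kC \<psi>m \<psi>1 \<psi>mono Hmono] by blast
    have gm[measurable]: "g \<in> borel_measurable borel" using g(1) by (rule borel_measurable_mono)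
    show "\<exists>g. mono g \<and> g \<in> borel_measurable borel \<and>
         (\<forall>B\<in>sets borel.
            measure M {\<omega> \<in> space M. (\<lambda>j\<in>N. tilde_p E G k j (\<lambda>i. p i \<omega>)) \<in> D \<and> tilde_p E G k i (\<lambda>i. p i \<omega>) \<in> B}
              = (\<integral>\<omega>. indicator B (tilde_p E G k i (\<lambda>i. p i \<omega>)) * g (tilde_p E G k i (\<lambda>i. p i \<omega>)) \<partial>M))"
    proof (intro exI conjI ballI)
      show "mono g" "g \<in> borel_measurable borel" using g(1) gm by auto
      fix B :: "real set" assume B[measurable]: "B \<in> sets borel"
      have Xm: "(\<lambda>\<omega>. tilde_p E G k v (\<lambda>i. p i \<omega>)) \<in> borel_measurable M" if v: "v \<in> N" for v
        by (rule tp_meas[where E=E and v=v and k=k and G=G and Y=p and M=M, OF dcfin[OF v] kr[OF v] Gm[OF v]])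
           (use dcN[OF v] rvN in auto)
      have XVm: "(\<lambda>\<omega>. \<lambda>j\<in>N. tilde_p E G k j (\<lambda>i. p i \<omega>)) \<in> measurable M (PiM N (\<lambda>_. borel))"
        by (rule measurable_restrict) (rule Xm)
      define S where "S = {\<omega> \<in> space M. (\<lambda>j\<in>N. tilde_p E G k j (\<lambda>i. p i \<omega>)) \<in> D \<and> tilde_p E G k i (\<lambda>i. p i \<omega>) \<in> B}"
      have Sset: "S \<in> sets M"
      proof -
        have "S = ((\<lambda>\<omega>. \<lambda>j\<in>N. tilde_p E G k j (\<lambda>i. p i \<omega>)) -` D \<inter> space M) \<inter> ((\<lambda>\<omega>. tilde_p E G k i (\<lambda>i. p i \<omega>)) -` B \<inter> space M)"
          unfolding S_def by auto
        also have "\<dots> \<in> sets M"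
          using measurable_sets[OF XVm D[THEN conjunct2]] measurable_sets[OF Xm[OF iN] B] by auto
        finally show ?thesis .
      qed
      have Pm: "(\<lambda>j\<in>N. tilde_p E G k j (\<lambda>i. p i \<omega>)) = (\<lambda>j\<in>N. tilde_p E G k j (\<lambda>j\<in>N. p j \<omega>))" for \<omega>
        using tp_eq by (intro restrict_ext) auto
      have tpi_mm: "tilde_p E G k i (mm u s b) = Hi (kth_smallest (k i) C u)" for u s b
      proof -
        have "tilde_p E G k i (mm u s b) = tilde_p E G k i u"
          by (rule tp_cong) (use mmC in \<open>auto simp: C_def\<close>)
        then show ?thesis by (simp add: hi_eq)
      qed
      have F1m: "(\<lambda>x. Fd x * indicator B (tilde_p E G k i x)) \<in> borel_measurable (PiM N (\<lambda>_. borel))"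
        using Fdm tpm[OF iN] by measurable
      have F2m: "(\<lambda>x. ennreal (indicator B (tilde_p E G k i x) * g (tilde_p E G k i x))) \<in> borel_measurable (PiM N (\<lambda>_. borel))"
        using tpm[OF iN] by measurable
      have "measure M S = enn2real (emeasure M S)" by (simp add: P.emeasure_eq_measure)
      also have "emeasure M S = (\<integral>\<^sup>+\<omega>. Fd (\<lambda>j\<in>N. p j \<omega>) * indicator B (tilde_p E G k i (\<lambda>j\<in>N. p j \<omega>)) \<partial>M)"
        unfolding nn_integral_indicator[OF Sset, symmetric]
      proof (rule nn_integral_cong)
        fix \<omega> assume "\<omega> \<in> space M"
        then show "indicator S \<omega> = Fd (\<lambda>j\<in>N. p j \<omega>) * indicator B (tilde_p E G k i (\<lambda>j\<in>N. p j \<omega>))"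
          unfolding S_def Fd_def using Pm[of \<omega>] tp_eq[OF iN, of \<omega>] by (auto simp: indicator_def)
      qed
      also have "\<dots> = (\<integral>\<^sup>+u. (\<integral>\<^sup>+s. (\<integral>\<^sup>+b. Fd (mm u s b) * indicator B (tilde_p E G k i (mm u s b)) \<partial>Lr) \<partial>Q (Snull - C)) \<partial>Q C)"
        by (rule law_i(1)[OF F1m])
      also have "\<dots> = (\<integral>\<^sup>+u. indicator B (Hi (kth_smallest (k i) C u)) * \<psi> u \<partial>Q C)"
      proof (rule nn_integral_cong)
        fix u
        show "(\<integral>\<^sup>+s. (\<integral>\<^sup>+b. Fd (mm u s b) * indicator B (tilde_p E G k i (mm u s b)) \<partial>Lr) \<partial>Q (Snull - C))
          = indicator B (Hi (kth_smallest (k i) C u)) * \<psi> u"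
          unfolding tpi_mm \<psi>_def by (cases "Hi (kth_smallest (k i) C u) \<in> B") simp_all
      qed
      also note g(3)[rule_format, OF B]
      also have "(\<integral>\<^sup>+u. indicator B (Hi (kth_smallest (k i) C u)) * ennreal (g (Hi (kth_smallest (k i) C u))) \<partial>Q C)
          = (\<integral>\<^sup>+u. (\<integral>\<^sup>+s. (\<integral>\<^sup>+b. ennreal (indicator B (tilde_p E G k i (mm u s b)) * g (tilde_p E G k i (mm u s b))) \<partial>Lr) \<partial>Q (Snull - C)) \<partial>Q C)"
      proof (rule nn_integral_cong)
        fix u
        show "indicator B (Hi (kth_smallest (k i) C u)) * ennreal (g (Hi (kth_smallest (k i) C u)))
          = (\<integral>\<^sup>+s. (\<integral>\<^sup>+b. ennreal (indicator B (tilde_p E G k i (mm u s b)) * g (tilde_p E G k i (mm u s b))) \<partial>Lr) \<partial>Q (Snull - C))"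
          unfolding tpi_mm using Lr.emeasure_space_1 QS2.emeasure_space_1
          by (simp add: nn_integral_const indicator_def)
      qed
      also have "\<dots> = (\<integral>\<^sup>+\<omega>. ennreal (indicator B (tilde_p E G k i (\<lambda>j\<in>N. p j \<omega>)) * g (tilde_p E G k i (\<lambda>j\<in>N. p j \<omega>))) \<partial>M)"
        by (rule law_i(1)[OF F2m, symmetric])
      also have "\<dots> = (\<integral>\<^sup>+\<omega>. ennreal (indicator B (tilde_p E G k i (\<lambda>i. p i \<omega>)) * g (tilde_p E G k i (\<lambda>i. p i \<omega>))) \<partial>M)"
        using tp_eq[OF iN] by simp
      finally have "measure M S = enn2real (\<integral>\<^sup>+\<omega>. ennreal (indicator B (tilde_p E G k i (\<lambda>i. p i \<omega>)) * g (tilde_p E G k i (\<lambda>i. p i \<omega>))) \<partial>M)" .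
      also have "\<dots> = (\<integral>\<omega>. indicator B (tilde_p E G k i (\<lambda>i. p i \<omega>)) * g (tilde_p E G k i (\<lambda>i. p i \<omega>)) \<partial>M)"
        using Xm[OF iN] g(2) by (subst integral_eq_nn_integral) auto
      finally show "measure M {\<omega> \<in> space M. (\<lambda>j\<in>N. tilde_p E G k j (\<lambda>i. p i \<omega>)) \<in> D \<and> tilde_p E G k i (\<lambda>i. p i \<omega>) \<in> B}
        = (\<integral>\<omega>. indicator B (tilde_p E G k i (\<lambda>i. p i \<omega>)) * g (tilde_p E G k i (\<lambda>i. p i \<omega>)) \<partial>M)"
        unfolding S_def .
    qed
  qed
qed

end
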